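(* Let $\mathbb{F}$ be a field of characteristic zero, $P_n=\mathbb{F}[x_1,\dots,x_n]$, and for a positive integer $a$ let $I_{n,a}=\big(x_1^a,\dots,x_n^a,(x_1+\cdots+x_n)^a\big)\subseteq P_n$. Let $n,a,d$ be positive integers with $d\ge a\ge 2$, and set $N(a,d)=\left\lceil \frac{2d}{a-1}\right\rceil$. If $n\ge N(a,d)+\frac{2d-1}{a-1}$, then for a general linear form $L\in P_n$ the map $(P_n/I_{n,a})_{d-1}\to (P_n/I_{n,a})_d$ given by multiplication by $L$ is injective.
   Context: For a graded ring $R$, $R_d$ denotes its degree-$d$ graded piece. "General linear form" means a linear form lying in a nonempty Zariski-open subset of the space of linear forms. *)

theory Defs
  imports "HOL-Analysis.Analysis" "HOL-Library.Poly_Mapping"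
begin

text \<open>Multivariate polynomials over 'a in variables x_0, x_1, ... are represented
  as finitely supported maps from monomials (exponent vectors nat =>0 nat)
  to coefficients; the ring structure is the one from HOL-Library.Poly_Mapping.\<close>

type_synonym 'a mpoly = "(nat \<Rightarrow>\<^sub>0 nat) \<Rightarrow>\<^sub>0 'a"

definition mvar :: "nat \<Rightarrow> 'a::comm_ring_1 mpoly" where
  "mvar i = Poly_Mapping.single (Poly_Mapping.single i 1) 1"

definition mon_deg :: "(nat \<Rightarrow>\<^sub>0 nat) \<Rightarrow> nat" where
  "mon_deg m = (\<Sum>i\<in>Poly_Mapping.keys m. Poly_Mapping.lookup m i)"

definition polys :: "nat \<Rightarrow> 'a::comm_ring_1 mpoly set" where
  "polys n = {p. \<forall>m\<in>Poly_Mapping.keys p. Poly_Mapping.keys m \<subseteq> {..<n}}"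

definition homog :: "nat \<Rightarrow> nat \<Rightarrow> 'a::comm_ring_1 mpoly set" where
  "homog n d = {p \<in> polys n. \<forall>m\<in>Poly_Mapping.keys p. mon_deg m = d}"

definition gen_ideal :: "nat \<Rightarrow> 'a::comm_ring_1 mpoly list \<Rightarrow> 'a mpoly set" where
  "gen_ideal n gs = {\<Sum>j<length gs. c j * gs ! j | c. \<forall>j<length gs. c j \<in> polys n}"

definition I_na :: "nat \<Rightarrow> nat \<Rightarrow> 'a::comm_ring_1 mpoly set" where
  "I_na n a = gen_ideal n (map (\<lambda>i. mvar i ^ a) [0..<n] @ [(\<Sum>i<n. mvar i) ^ a])"

text \<open>Multiplication by L from (P_n/I)_{d-1} to (P_n/I)_d is injective
  (elements of (P_n/I)_k are classes of homogeneous forms of degree k modulo I).\<close>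
definition mult_injective :: "nat \<Rightarrow> 'a::comm_ring_1 mpoly set \<Rightarrow> 'a mpoly \<Rightarrow> nat \<Rightarrow> bool" where
  "mult_injective n I L d \<longleftrightarrow>
     (\<forall>f\<in>homog n (d - 1). L * f \<in> I \<longrightarrow> f \<in> I)"

definition lin_form :: "nat \<Rightarrow> (nat \<Rightarrow> 'a::comm_ring_1) \<Rightarrow> 'a mpoly" where
  "lin_form n c = (\<Sum>i<n. Poly_Mapping.single (Poly_Mapping.single i 1) (c i))"

definition mpeval :: "'a::comm_ring_1 mpoly \<Rightarrow> (nat \<Rightarrow> 'a) \<Rightarrow> 'a" where
  "mpeval p c = (\<Sum>m\<in>Poly_Mapping.keys p. Poly_Mapping.lookup p m * (\<Prod>i\<in>Poly_Mapping.keys m. c i ^ Poly_Mapping.lookup m i))"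

definition affine_space :: "nat \<Rightarrow> (nat \<Rightarrow> 'a::zero) set" where
  "affine_space n = {c. \<forall>i\<ge>n. c i = 0}"

definition zariski_open :: "nat \<Rightarrow> (nat \<Rightarrow> 'a::comm_ring_1) set \<Rightarrow> bool" where
  "zariski_open n U \<longleftrightarrow> (\<exists>S\<subseteq>polys n. U = {c\<in>affine_space n. \<exists>g\<in>S. mpeval g c \<noteq> 0})"

definition general_linear_form :: "nat \<Rightarrow> ('a::comm_ring_1 mpoly \<Rightarrow> bool) \<Rightarrow> bool" where
  "general_linear_form n Q \<longleftrightarrow>
     (\<exists>U. zariski_open n U \<and> U \<noteq> {} \<and> (\<forall>c\<in>U. Q (lin_form n c)))"

end

theory Submission
  imports Defs "Jordan_Normal_Form.Determinant"
begin


abbreviation LK where "LK \<equiv> Poly_Mapping.lookup"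
abbreviation KS where "KS \<equiv> Poly_Mapping.keys"
abbreviation SG where "SG \<equiv> Poly_Mapping.single"

abbreviation sc :: "'a::comm_ring_1 \<Rightarrow> 'a mpoly \<Rightarrow> 'a mpoly" where
  "sc c p \<equiv> SG 0 c * p"

lemma poly_sum_singles: "p = (\<Sum>m\<in>KS p. SG m (LK p m))"
proof (rule poly_mapping_eqI)
  fix k
  show "LK p k = LK (\<Sum>m\<in>KS p. SG m (LK p m)) k"
    by (cases "k \<in> KS p") (auto simp: lookup_sum lookup_single when_def in_keys_iff)
qed

lemma mpoly_induct_keys[consumes 1, case_names zero single add]:
  fixes p :: "'a::comm_ring_1 mpoly"
  assumes "\<forall>m\<in>KS p. Q m" "P 0" "\<And>m c. Q m \<Longrightarrow> P (SG m c)"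
    "\<And>p q. P p \<Longrightarrow> P q \<Longrightarrow> P (p + q)"
  shows "P p"
proof -
  have "A \<subseteq> KS p \<Longrightarrow> P (\<Sum>m\<in>A. SG m (LK p m))" for A
  proof (induction A rule: infinite_finite_induct)
    case (infinite A) then show ?case using finite_subset[OF _ finite_keys] by blast
  next
    case empty then show ?case using assms by simp
  next
    case (insert x F) then show ?case using assms by simp
  qed
  then show ?thesis by (metis order_refl poly_sum_singles)
qed

lemma mpoly_induct[case_names zero single add]:
  fixes p :: "'a::comm_ring_1 mpoly"
  assumes "P 0" "\<And>m c. P (SG m c)" "\<And>p q. P p \<Longrightarrow> P q \<Longrightarrow> P (p + q)"
  shows "P p"
  using mpoly_induct_keys[of p "\<lambda>_. True" P] assms by auto

definition lext :: "((nat \<Rightarrow>\<^sub>0 nat) \<Rightarrow> 'a::comm_ring_1 mpoly) \<Rightarrow> 'a mpoly \<Rightarrow> 'a mpoly" where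
  "lext F p = (\<Sum>m\<in>KS p. sc (LK p m) (F m))"

lemma lext_add: "lext F (p + q) = lext F p + lext F q"
  unfolding lext_def
  by (rule setsum_keys_plus_distrib) (auto simp: single_add distrib_right)

lemma lext_zero[simp]: "lext F 0 = 0"
  by (simp add: lext_def)

lemma lext_single[simp]: "lext F (SG m c) = sc c (F m)"
  by (cases "c = 0") (auto simp: lext_def)

lemma lext_uminus: "lext F (- p) = - lext F p"
proof -
  have "lext F p + lext F (-p) = 0" using lext_add[of F p "-p"] by simp
  then show ?thesis by (rule minus_unique[symmetric])
qed

lemma lext_diff: "lext F (p - q) = lext F p - lext F q"
  using lext_add[of F p "-q"] lext_uminus[of F q] by simp

lemma lext_sum: "lext F (\<Sum>i\<in>A. f i) = (\<Sum>i\<in>A. lext F (f i))"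
  by (induction A rule: infinite_finite_induct) (auto simp: lext_add)

lemma sc_single: "sc c (SG m d) = SG m (c * d)"
  by (simp add: mult_single)

lemma sc_sc: "sc c (sc d x) = sc (c * d) x"
  by (simp add: mult.assoc[symmetric] mult_single)

lemma lext_sc: "lext F (sc c p) = sc c (lext F p)"
proof (induction p rule: mpoly_induct)
  case zero then show ?case by simp
next
  case (single m d) then show ?case by (simp add: sc_single sc_sc)
next
  case (add p q) then show ?case by (simp add: distrib_left lext_add)
qed

definition mon_eval :: "(nat \<Rightarrow>\<^sub>0 nat) \<Rightarrow> (nat \<Rightarrow> 'a::comm_ring_1) \<Rightarrow> 'a" where
  "mon_eval m c = (\<Prod>i\<in>KS m. c i ^ LK m i)"

lemma keys_add_nat: "KS ((m1::nat \<Rightarrow>\<^sub>0 nat) + m2) = KS m1 \<union> KS m2"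
  by (auto simp: in_keys_iff lookup_add)

lemma mon_eval_alt: "finite A \<Longrightarrow> KS m \<subseteq> A \<Longrightarrow> mon_eval m c = (\<Prod>i\<in>A. c i ^ LK m i)"
  unfolding mon_eval_def
  by (rule prod.mono_neutral_left) (auto simp: in_keys_iff)

lemma mon_eval_add: "mon_eval (m1 + m2) c = mon_eval m1 c * mon_eval m2 c"
proof -
  let ?A = "KS m1 \<union> KS m2"
  have "mon_eval (m1 + m2) c = (\<Prod>i\<in>?A. c i ^ LK (m1 + m2) i)"
    by (rule mon_eval_alt) (auto simp: keys_add_nat)
  also have "\<dots> = (\<Prod>i\<in>?A. c i ^ LK m1 i) * (\<Prod>i\<in>?A. c i ^ LK m2 i)"
    by (simp add: lookup_add power_add prod.distrib)
  also have "\<dots> = mon_eval m1 c * mon_eval m2 c"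
    by (subst (1 2) mon_eval_alt[symmetric]) auto
  finally show ?thesis .
qed

lemma mon_eval_zero[simp]: "mon_eval 0 c = 1"
  by (simp add: mon_eval_def)

lemma mon_eval_var[simp]: "mon_eval (SG i 1) c = c i"
  by (simp add: mon_eval_def)

lemma mpeval_alt: "mpeval p c = (\<Sum>m\<in>KS p. LK p m * mon_eval m c)"
  by (simp add: mpeval_def mon_eval_def)

lemma mpeval_add: "mpeval (p + q) c = mpeval p c + mpeval q c"
  unfolding mpeval_alt
  by (rule setsum_keys_plus_distrib) (auto simp: distrib_right)

lemma mpeval_zero[simp]: "mpeval 0 c = 0"
  by (simp add: mpeval_alt)

lemma mpeval_single[simp]: "mpeval (SG m a) c = a * mon_eval m c"
  by (cases "a = 0") (auto simp: mpeval_alt)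

lemma mpeval_one[simp]: "mpeval 1 c = 1"
  using mpeval_single[of 0 1 c] by (simp del: mpeval_single)

lemma mpeval_mult: "mpeval (p * q) c = mpeval p c * mpeval q c"
proof (induction p rule: mpoly_induct)
  case zero then show ?case by simp
next
  case (single m a)
  show ?case
  proof (induction q rule: mpoly_induct)
    case zero then show ?case by simp
  next
    case (single m' b) then show ?case by (simp add: mult_single mon_eval_add)
  next
    case (add p q) then show ?case by (simp add: distrib_left mpeval_add)
  qed
next
  case (add p q) then show ?case by (simp add: distrib_right mpeval_add)
qed

lemma mpeval_uminus: "mpeval (- p) c = - mpeval p c"
proof -
  have "mpeval p c + mpeval (-p) c = 0" using mpeval_add[of p "-p" c] by simp
  then show ?thesis by (rule minus_unique[symmetric])
qed

lemma mpeval_sum: "mpeval (\<Sum>i\<in>A. f i) c = (\<Sum>i\<in>A. mpeval (f i) c)"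
  by (induction A rule: infinite_finite_induct) (auto simp: mpeval_add)


definition ev :: "nat \<Rightarrow> (nat \<Rightarrow>\<^sub>0 nat)" where "ev i = SG i 1"

lemma lookup_ev: "LK (ev i) j = (if i = j then 1 else 0)"
  by (simp add: ev_def lookup_single when_def)

lemma mvar_ev: "mvar i = SG (ev i) 1"
  by (simp add: mvar_def ev_def)

lemma keys_sc_subset: "KS (sc c p) \<subseteq> KS p"
  using keys_mult[of "SG 0 c" p] by (auto split: if_splits)

lemma polys_add: "p \<in> polys n \<Longrightarrow> q \<in> polys n \<Longrightarrow> p + q \<in> polys n"
  unfolding polys_def using keys_add[of p q] by blast

lemma polys_mult: "p \<in> polys n \<Longrightarrow> q \<in> polys n \<Longrightarrow> p * q \<in> polys n"
  unfolding polys_def using keys_mult[of p q] by (force simp: keys_add_nat)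

lemma polys_uminus: "p \<in> polys n \<Longrightarrow> - p \<in> polys n"
  unfolding polys_def by simp

lemma polys_diff: "p \<in> polys n \<Longrightarrow> q \<in> polys n \<Longrightarrow> p - q \<in> polys n"
  using polys_add[of p n "-q"] polys_uminus[of q n] by simp

lemma polys_zero[simp]: "0 \<in> polys n" by (simp add: polys_def)

lemma polys_single: "KS m \<subseteq> {..<n} \<Longrightarrow> SG m c \<in> polys n"
  by (simp add: polys_def)

lemma polys_one[simp]: "1 \<in> polys n"
  by (simp add: polys_def)

lemma polys_sum: "(\<And>i. i \<in> A \<Longrightarrow> f i \<in> polys n) \<Longrightarrow> (\<Sum>i\<in>A. f i) \<in> polys n"
  by (induction A rule: infinite_finite_induct) (auto intro: polys_add)

lemma polys_pow: "p \<in> polys n \<Longrightarrow> p ^ k \<in> polys n"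
  by (induction k) (auto intro: polys_mult)

lemma polys_mvar: "i < n \<Longrightarrow> mvar i \<in> polys n"
  by (simp add: mvar_def polys_def)

lemma polys_sc: "p \<in> polys n \<Longrightarrow> sc c p \<in> polys n"
  by (rule polys_mult[OF polys_single]) auto

definition sdeg :: "nat set \<Rightarrow> (nat \<Rightarrow>\<^sub>0 nat) \<Rightarrow> nat" where
  "sdeg S m = (\<Sum>i\<in>S. LK m i)"

definition homS :: "nat set \<Rightarrow> nat \<Rightarrow> 'a::comm_ring_1 mpoly \<Rightarrow> bool" where
  "homS S k p \<longleftrightarrow> (\<forall>m\<in>KS p. sdeg S m = k)"

lemma sdeg_add: "sdeg S (m1 + m2) = sdeg S m1 + sdeg S m2"
  by (simp add: sdeg_def lookup_add sum.distrib)

lemma sdeg_ev: "finite S \<Longrightarrow> sdeg S (ev i) = (if i \<in> S then 1 else 0)"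
  by (simp add: sdeg_def lookup_ev)

lemma sdeg_zero[simp]: "sdeg S 0 = 0" by (simp add: sdeg_def)

lemma homS_mult: "homS S k p \<Longrightarrow> homS S l q \<Longrightarrow> homS S (k + l) (p * q)"
  unfolding homS_def using keys_mult[of p q] by (force simp: sdeg_add)

lemma homS_add: "homS S k p \<Longrightarrow> homS S k q \<Longrightarrow> homS S k (p + q)"
  unfolding homS_def using keys_add[of p q] by blast

lemma homS_zero[simp]: "homS S k 0" by (simp add: homS_def)

lemma homS_uminus: "homS S k p \<Longrightarrow> homS S k (- p)"
  by (simp add: homS_def)

lemma homS_sc: "homS S k p \<Longrightarrow> homS S k (sc c p)"
  unfolding homS_def using keys_sc_subset by blast

lemma homS_sum: "(\<And>i. i \<in> A \<Longrightarrow> homS S k (f i)) \<Longrightarrow> homS S k (\<Sum>i\<in>A. f i)"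
  by (induction A rule: infinite_finite_induct) (auto intro: homS_add)

lemma homS_one[simp]: "homS S 0 1" by (simp add: homS_def)

lemma homS_pow: "homS S k p \<Longrightarrow> homS S (k * s) (p ^ s)"
  by (induction s) (auto dest: homS_mult[of S k p])

lemma homS_single: "homS S (sdeg S m) (SG m c)"
  by (simp add: homS_def)

lemma homS_single_const: "homS S 0 (SG 0 c)"
  using homS_single[of S 0 c] by simp

definition Lsum :: "nat set \<Rightarrow> 'a::comm_ring_1 mpoly" where
  "Lsum S = (\<Sum>i\<in>S. mvar i)"

lemma homS_Lsum: "finite S \<Longrightarrow> homS S 1 (Lsum S)"
  unfolding Lsum_def by (intro homS_sum) (metis homS_single mvar_ev sdeg_ev)

lemma homS_Lsum0: "finite T \<Longrightarrow> S \<inter> T = {} \<Longrightarrow> homS T 0 (Lsum S)"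
  unfolding Lsum_def by (intro homS_sum) (metis disjoint_iff homS_single mvar_ev sdeg_ev)

lemma polys_Lsum: "S \<subseteq> {..<n} \<Longrightarrow> Lsum S \<in> polys n"
  unfolding Lsum_def by (auto intro!: polys_sum polys_mvar)

definition flt :: "((nat \<Rightarrow>\<^sub>0 nat) \<Rightarrow> bool) \<Rightarrow> 'a::comm_ring_1 mpoly \<Rightarrow> 'a mpoly" where
  "flt P p = Poly_Mapping.mapp (\<lambda>m c. if P m then c else 0) p"

lemma lookup_flt: "LK (flt P p) m = (if P m then LK p m else 0)"
  by (auto simp: flt_def lookup_mapp when_def in_keys_iff)

lemma flt_add: "flt P (p + q) = flt P p + flt P q"
  by (rule poly_mapping_eqI) (simp add: lookup_flt lookup_add)

lemma flt_zero[simp]: "flt P 0 = 0"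
  by (rule poly_mapping_eqI) (simp add: lookup_flt)

lemma flt_single: "flt P (SG m c) = (if P m then SG m c else 0)"
  by (rule poly_mapping_eqI) (simp add: lookup_flt lookup_single when_def)

lemma keys_flt: "KS (flt P p) \<subseteq> KS p"
  by (auto simp: in_keys_iff lookup_flt split: if_splits)

lemma keys_flt2: "m \<in> KS (flt P p) \<Longrightarrow> P m"
  by (auto simp: in_keys_iff lookup_flt split: if_splits)

lemma flt_uminus: "flt P (- p) = - flt P p"
  by (rule poly_mapping_eqI) (simp add: lookup_flt)

lemma flt_diff: "flt P (p - q) = flt P p - flt P q"
  by (rule poly_mapping_eqI) (simp add: lookup_flt lookup_minus)

lemma flt_sum: "flt P (\<Sum>i\<in>A. f i) = (\<Sum>i\<in>A. flt P (f i))"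
  by (induction A rule: infinite_finite_induct) (auto simp: flt_add)

definition dcomp :: "nat set \<Rightarrow> nat \<Rightarrow> 'a::comm_ring_1 mpoly \<Rightarrow> 'a mpoly" where
  "dcomp S t = flt (\<lambda>m. sdeg S m = t)"

definition rn :: "nat \<Rightarrow> 'a::comm_ring_1 mpoly \<Rightarrow> 'a mpoly" where
  "rn n = flt (\<lambda>m. KS m \<subseteq> {..<n})"

lemma t1: "dcomp S t (0::'a::comm_ring_1 mpoly) = 0" by (simp add: dcomp_def)
lemma t2: "dcomp S t (p + (q::'a::comm_ring_1 mpoly)) = dcomp S t p + dcomp S t q" by (simp only: dcomp_def flt_add)
lemma t3: assumes e: "sdeg S m' = e" shows "dcomp S t (SG m' c' * SG m (c::'a::comm_ring_1)) = (if e \<le> t then SG m' c' * dcomp S (t - e) (SG m c) else 0)"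
proof -
    have L: "dcomp S t (SG m' c' * SG m c) = (if e + sdeg S m = t then SG (m' + m) (c' * c) else 0)"
      by (simp add: mult_single dcomp_def flt_single sdeg_add e)
    have R: "dcomp S (t - e) (SG m c) = (if sdeg S m = t - e then SG m c else 0)"
      by (simp add: dcomp_def flt_single)
    show ?thesis unfolding L R by (auto simp: mult_single)
qed

lemma comp_mult_hom:
  assumes "homS S e q"
  shows "dcomp S t (q * p) = (if e \<le> t then q * dcomp S (t - e) p else 0)"
proof (induction p rule: mpoly_induct)
  case zero then show ?case by (simp add: t1)
next
  case (add p1 p2)
  have "dcomp S t (q * (p1 + p2)) = dcomp S t (q * p1) + dcomp S t (q * p2)"
    by (simp only: t2 distrib_left)
  then show ?case using add.IH by (cases "e \<le> t") (simp_all add: t2 distrib_left)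
next
  case (single m c)
  have hq: "\<forall>m'\<in>KS q. sdeg S m' = e" using assms by (simp add: homS_def)
  then show ?case
  proof (induction q rule: mpoly_induct_keys)
    case zero then show ?case by (simp add: t1)
  next
    case (single m' c')
    then show ?case by (intro t3) simp
  next
    case (add p q)
    have "dcomp S t ((p + q) * SG m c) = dcomp S t (p * SG m c) + dcomp S t (q * SG m c)"
      by (simp only: distrib_right t2)
    then show ?case using add.IH by (cases "e \<le> t") (simp_all add: distrib_right)
  qed
qed

lemma comp_decomp:
  assumes "\<forall>m\<in>KS p. sdeg S m \<le> T"
  shows "p = (\<Sum>t\<le>T. dcomp S t p)"
proof (rule poly_mapping_eqI)
  fix m
  show "LK p m = LK (\<Sum>t\<le>T. dcomp S t p) m"
  proof (cases "m \<in> KS p")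
    case True
    then have "sdeg S m \<le> T" using assms by auto
    then show ?thesis by (simp add: lookup_sum dcomp_def lookup_flt)
  next
    case False
    then show ?thesis by (simp add: lookup_sum dcomp_def lookup_flt in_keys_iff)
  qed
qed

lemma homS_comp: "homS S t (dcomp S t p)"
  unfolding homS_def dcomp_def using keys_flt2 by blast

lemma rn_add: "rn n (p + q) = rn n p + rn n q"
  by (simp only: rn_def flt_add)

lemma rn_zero[simp]: "rn n 0 = 0"
  by (simp add: rn_def)

lemma rn_ss: "rn n (SG m a * SG m' b) = rn n (SG m a) * rn n (SG m' b)"
proof -
  have "rn n (SG m a * SG m' b) = (if KS m \<subseteq> {..<n} \<and> KS m' \<subseteq> {..<n} then SG (m + m') (a * b) else 0)"
    by (simp add: rn_def mult_single flt_single keys_add_nat)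
  then show ?thesis by (simp add: rn_def flt_single mult_single)
qed

lemma rn_mult: "rn n (p * q) = rn n p * rn n (q::'a::comm_ring_1 mpoly)"
proof (induction p rule: mpoly_induct)
  case zero then show ?case by simp
next
  case (add p1 p2) then show ?case by (simp only: rn_add distrib_right)
next
  case (single m c)
  show ?case
  proof (induction q rule: mpoly_induct)
    case zero then show ?case by simp
  next
    case (single m' c') then show ?case by (rule rn_ss)
  next
    case (add p q) then show ?case by (simp only: rn_add distrib_left)
  qed
qed

lemma rn_polys: "rn n p \<in> polys n"
  unfolding polys_def rn_def using keys_flt2 by blast

lemma rn_id: "p \<in> polys n \<Longrightarrow> rn n p = p"
  by (rule poly_mapping_eqI) (auto simp: rn_def lookup_flt polys_def in_keys_iff)

lemma rn_one[simp]: "rn n 1 = 1"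
  by (simp add: rn_id)

definition Jm :: "nat \<Rightarrow> nat \<Rightarrow> 'a::comm_ring_1 mpoly set" where
  "Jm n a = {p. \<forall>m\<in>KS p. \<exists>i<n. a \<le> LK m i}"

lemma Jm_add: "p \<in> Jm n a \<Longrightarrow> q \<in> Jm n a \<Longrightarrow> p + q \<in> Jm n a"
  unfolding Jm_def using keys_add[of p q] by blast

lemma Jm_mult: assumes "p \<in> Jm n a" shows "q * p \<in> Jm n a"
  unfolding Jm_def
proof (simp only: mem_Collect_eq, intro ballI)
  fix m assume "m \<in> KS (q * p)"
  then obtain m1 m2 where m: "m = m1 + m2" "m2 \<in> KS p" using keys_mult[of q p] by blast
  then obtain i where "i < n" "a \<le> LK m2 i" using assms by (auto simp: Jm_def)
  then show "\<exists>i<n. a \<le> LK m i" unfolding m by (auto simp: lookup_add intro!: exI[of _ i])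
qed

lemma Jm_mult2: "p \<in> Jm n a \<Longrightarrow> p * q \<in> Jm n a"
  using Jm_mult[of p n a q] by (simp add: mult.commute)

lemma Jm_uminus: "p \<in> Jm n a \<Longrightarrow> - p \<in> Jm n a"
  by (simp add: Jm_def)

lemma Jm_diff: "p \<in> Jm n a \<Longrightarrow> q \<in> Jm n a \<Longrightarrow> p - q \<in> Jm n a"
  using Jm_add[of p n a "-q"] Jm_uminus[of q n a] by simp

lemma Jm_zero[simp]: "0 \<in> Jm n a" by (simp add: Jm_def)

lemma Jm_flt: "p \<in> Jm n a \<Longrightarrow> flt P p \<in> Jm n a"
  unfolding Jm_def using keys_flt by blast

lemma Jm_sum: "(\<And>i. i \<in> A \<Longrightarrow> f i \<in> Jm n a) \<Longrightarrow> (\<Sum>i\<in>A. f i) \<in> Jm n a"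
  by (induction A rule: infinite_finite_induct) (auto intro: Jm_add)

lemma mvar_pow: "mvar i ^ k = SG (SG i k) (1::'a::comm_ring_1)"
proof (induction k)
  case 0 then show ?case by simp
next
  case (Suc k)
  have "mvar i ^ Suc k = mvar i * mvar i ^ k" by simp
  also have "\<dots> = mvar i * SG (SG i k) (1::'a)" by (simp only: Suc.IH)
  also have "\<dots> = SG (SG i 1 + SG i k) 1" by (simp add: mvar_def mult_single)
  also have "SG i 1 + SG i k = SG i (Suc k)" by (simp flip: single_add)
  finally show ?case .
qed

lemma Jm_mvar_pow: "i < n \<Longrightarrow> mvar i ^ a \<in> Jm n a"
  by (auto simp: mvar_pow Jm_def)


definition gam :: "nat \<Rightarrow> (nat \<Rightarrow>\<^sub>0 nat) \<Rightarrow> nat \<Rightarrow> 'a::comm_ring_1" where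
  "gam a m i = of_nat (LK m i) * (of_nat a - of_nat (LK m i))"

definition Dmon :: "nat set \<Rightarrow> nat \<Rightarrow> (nat \<Rightarrow>\<^sub>0 nat) \<Rightarrow> 'a::comm_ring_1 mpoly" where
  "Dmon S a m = (\<Sum>i\<in>S. SG (m - ev i) (gam a m i))"

definition Dop :: "nat set \<Rightarrow> nat \<Rightarrow> 'a::comm_ring_1 mpoly \<Rightarrow> 'a mpoly" where
  "Dop S a = lext (Dmon S a)"

lemma Dop_add: "Dop S a (p + q) = Dop S a p + Dop S a q"
  by (simp add: Dop_def lext_add)
lemma Dop_zero[simp]: "Dop S a 0 = 0"
  by (simp add: Dop_def)
lemma Dop_single: "Dop S a (SG m c) = sc c (Dmon S a m)"
  by (simp add: Dop_def)
lemma Dop_sc: "Dop S a (sc c p) = sc c (Dop S a p)"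
  by (simp add: Dop_def lext_sc)
lemma Dop_sum: "Dop S a (\<Sum>i\<in>A. f i) = (\<Sum>i\<in>A. Dop S a (f i))"
  by (simp add: Dop_def lext_sum)

lemma gam_zero: "LK m i = 0 \<Longrightarrow> gam a m i = 0"
  by (simp add: gam_def)

lemma ev_split: "LK m i \<noteq> 0 \<Longrightarrow> m = (m - ev i) + ev i"
  by (rule poly_mapping_eqI) (auto simp: lookup_add lookup_minus lookup_ev)

lemma Dmon_keys:
  assumes "m' \<in> KS (Dmon S a m :: 'a::comm_ring_1 mpoly)"
  shows "\<exists>i\<in>S. gam a m i \<noteq> (0::'a) \<and> m = m' + ev i"
proof -
  obtain i where i: "i \<in> S" "m' \<in> KS (SG (m - ev i) (gam a m i :: 'a))"
    using assms keys_sum[of "\<lambda>i. SG (m - ev i) (gam a m i :: 'a)" S] by (auto simp: Dmon_def)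
  then have g: "gam a m i \<noteq> (0::'a)" and m': "m' = m - ev i" by (auto split: if_splits)
  then have "LK m i \<noteq> 0" using gam_zero by blast
  then show ?thesis using i g m' ev_split by blast
qed

lemma Dop_keys:
  assumes "m' \<in> KS (Dop S a (p :: 'a::comm_ring_1 mpoly))"
  shows "\<exists>m\<in>KS p. m' \<in> KS (Dmon S a m :: 'a::comm_ring_1 mpoly)"
proof -
  have "Dop S a p = (\<Sum>m\<in>KS p. sc (LK p m) (Dmon S a m))" by (simp add: Dop_def lext_def)
  then obtain m where "m \<in> KS p" "m' \<in> KS (sc (LK p m) (Dmon S a m))"
    using assms keys_sum[of "\<lambda>m. sc (LK p m) (Dmon S a m)" "KS p"] by auto
  then show ?thesis using keys_sc_subset[of "LK p m" "Dmon S a m"] by blast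
qed

lemma sdeg_ev_add: "finite S \<Longrightarrow> i \<in> S \<Longrightarrow> sdeg S (m' + ev i) = sdeg S m' + 1"
  by (simp add: sdeg_add sdeg_ev)

lemma Dop_homS:
  fixes p :: "'a::comm_ring_1 mpoly"
  assumes "finite S" "homS S k p"
  shows "homS S (k - 1) (Dop S a p)"
  unfolding homS_def
proof
  fix m' assume "m' \<in> KS (Dop S a p)"
  then obtain m where m: "m \<in> KS p" "m' \<in> KS (Dmon S a m :: 'a mpoly)" using Dop_keys by blast
  then obtain i where "i \<in> S" "m = m' + ev i" using Dmon_keys[OF m(2)] by blast
  then have "sdeg S m = sdeg S m' + 1" using assms sdeg_ev_add by simp
  moreover have "sdeg S m = k" using m assms by (simp add: homS_def)
  ultimately show "sdeg S m' = k - 1" by simp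
qed

lemma Dop_hom0:
  fixes p :: "'a::comm_ring_1 mpoly"
  assumes "finite S" "homS S 0 p"
  shows "Dop S a p = 0"
proof (rule ccontr)
  assume "Dop S a p \<noteq> 0"
  then obtain m' where "m' \<in> KS (Dop S a p)" by (metis all_not_in_conv keys_eq_empty)
  then obtain m where m: "m \<in> KS p" "m' \<in> KS (Dmon S a m :: 'a mpoly)" using Dop_keys by blast
  then obtain i where "i \<in> S" "m = m' + ev i" using Dmon_keys[OF m(2)] by blast
  then have "sdeg S m = sdeg S m' + 1" using assms sdeg_ev_add by simp
  moreover have "sdeg S m = 0" using m assms by (simp add: homS_def)
  ultimately show False by simp
qed

lemma Dop_Jm:
  fixes p :: "'a::comm_ring_1 mpoly"
  assumes "p \<in> Jm n a"
  shows "Dop S a p \<in> Jm n a"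
  unfolding Jm_def
proof (simp only: mem_Collect_eq, intro ballI)
  fix m' assume "m' \<in> KS (Dop S a p)"
  then obtain m where m: "m \<in> KS p" "m' \<in> KS (Dmon S a m :: 'a mpoly)" using Dop_keys by blast
  then obtain i where i: "i \<in> S" "gam a m i \<noteq> (0::'a)" "m = m' + ev i" using Dmon_keys[OF m(2)] by blast
  obtain j where j: "j < n" "a \<le> LK m j" using m assms by (auto simp: Jm_def)
  show "\<exists>j<n. a \<le> LK m' j"
  proof (cases "j = i")
    case True
    have "LK m i \<noteq> a" using i(2) by (auto simp: gam_def)
    then have "a < LK m i" using j True by simp
    then have "a \<le> LK m' i" using i(3) by (simp add: lookup_add lookup_ev)
    then show ?thesis using j True by blast
  next
    case False
    then have "LK m' j = LK m j" using i(3) by (simp add: lookup_add lookup_ev)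
    then show ?thesis using j by auto
  qed
qed

lemma Dmon_shift:
  assumes "KS m1 \<inter> S = {}"
  shows "Dmon S a (m1 + m2) = SG m1 1 * (Dmon S a m2 :: 'a::comm_ring_1 mpoly)"
proof -
  have "SG (m1 + m2 - ev i) (gam a (m1 + m2) i) = SG m1 1 * SG (m2 - ev i) (gam a m2 i :: 'a)"
    if "i \<in> S" for i
  proof -
    have z: "LK m1 i = 0" using assms that by (auto simp: in_keys_iff)
    have "gam a (m1 + m2) i = (gam a m2 i :: 'a)" by (simp add: gam_def lookup_add z)
    moreover have "m1 + m2 - ev i = m1 + (m2 - ev i)"
      by (rule poly_mapping_eqI) (auto simp: lookup_add lookup_minus lookup_ev z)
    ultimately show ?thesis by (simp add: mult_single)
  qed
  then show ?thesis by (simp add: Dmon_def sum_distrib_left)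
qed

lemma Dop_mult_disj:
  assumes "\<forall>m\<in>KS q. KS m \<inter> S = {}"
  shows "Dop S a (q * p) = q * Dop S a p"
proof (induction p rule: mpoly_induct)
  case zero then show ?case by simp
next
  case (add p1 p2) then show ?case by (simp only: distrib_left Dop_add)
next
  case (single m c)
  show ?case using assms
  proof (induction q rule: mpoly_induct_keys)
    case zero then show ?case by simp
  next
    case (single m' c')
    have "Dop S a (SG m' c' * SG m c) = sc (c' * c) (Dmon S a (m' + m))"
      by (simp add: mult_single Dop_single)
    also have "\<dots> = sc (c' * c) (SG m' 1 * Dmon S a m)" using single by (simp add: Dmon_shift)
    also have "\<dots> = SG m' c' * sc c (Dmon S a m)"
      by (simp add: mult.assoc[symmetric] mult_single)
    finally show ?case by (simp add: Dop_single)
  next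
    case (add p q) then show ?case by (simp only: distrib_right Dop_add)
  qed
qed

lemma lookup_ev_add: "LK (ev j + m) i = (if i = j then 1 else 0) + LK m i"
  by (simp add: lookup_add lookup_ev)

lemma pair_id:
  "SG (ev j + m - ev i) (gam a (ev j + m) i :: 'a::comm_ring_1) =
   SG (ev j + (m - ev i)) (gam a m i) + (if i = j then SG m (of_nat a - 1 - 2 * of_nat (LK m i)) else 0)"
proof (cases "i = j")
  case False
  have g: "gam a (ev j + m) i = (gam a m i :: 'a)" using False by (simp add: gam_def lookup_ev_add)
  show ?thesis
  proof (cases "LK m i = 0")
    case True then show ?thesis using False g by (simp add: gam_zero)
  next
    case nz: False
    have "ev j + m - ev i = ev j + (m - ev i)"
      by (rule poly_mapping_eqI) (use nz False in \<open>auto simp: lookup_add lookup_minus lookup_ev\<close>)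
    then show ?thesis using False g by simp
  qed
next
  case True
  have e1: "ev i + m - ev i = m"
    by (rule poly_mapping_eqI) (simp add: lookup_add lookup_minus lookup_ev)
  show ?thesis
  proof (cases "LK m i = 0")
    case z: True
    have "gam a (ev i + m) i = (of_nat a - 1 :: 'a)" using z by (simp add: gam_def lookup_ev_add)
    then show ?thesis using True e1 z by (simp add: gam_zero)
  next
    case nz: False
    have e2: "ev i + (m - ev i) = m"
      by (rule poly_mapping_eqI) (use nz in \<open>auto simp: lookup_add lookup_minus lookup_ev\<close>)
    have l: "LK (ev i + m) i = Suc (LK m i)" by (simp add: lookup_add lookup_ev)
    have "gam a (ev i + m) i = (of_nat (Suc (LK m i)) * (of_nat a - of_nat (Suc (LK m i))) :: 'a)"
      by (simp only: gam_def l)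
    also have "\<dots> = gam a m i + (of_nat a - 1 - 2 * of_nat (LK m i))"
      by (simp add: gam_def algebra_simps)
    finally have "gam a (ev i + m) i = (gam a m i + (of_nat a - 1 - 2 * of_nat (LK m i)) :: 'a)" .
    then show ?thesis using True e1 e2 by (simp add: single_add)
  qed
qed

lemma single_sum: "SG m (\<Sum>j\<in>A. f j) = (\<Sum>j\<in>A. SG m (f j))"
  by (induction A rule: infinite_finite_induct) (auto simp: single_add)

definition kap :: "nat set \<Rightarrow> nat \<Rightarrow> nat \<Rightarrow> 'a::comm_ring_1" where
  "kap S a k = of_nat (card S) * (of_nat a - 1) - 2 * of_nat k"

lemma comm_mon:
  assumes "finite S"
  shows "Dop S a (Lsum S * SG m 1) = Lsum S * Dmon S a m + SG m (kap S a (sdeg S m) :: 'a::comm_ring_1)"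
proof -
  have L1: "Lsum S * SG m (1::'a) = (\<Sum>j\<in>S. SG (ev j + m) 1)"
    by (simp add: Lsum_def sum_distrib_right mvar_ev mult_single)
  have A: "Dop S a (Lsum S * SG m (1::'a)) = (\<Sum>j\<in>S. \<Sum>i\<in>S. SG (ev j + m - ev i) (gam a (ev j + m) i))"
    unfolding L1 Dop_sum by (simp add: Dop_single Dmon_def)
  have "Lsum S * Dmon S a m = (\<Sum>i\<in>S. \<Sum>j\<in>S. SG (ev j + (m - ev i)) (gam a m i :: 'a))"
    by (simp add: Lsum_def Dmon_def sum_distrib_right sum_distrib_left mvar_ev mult_single)
  also have "\<dots> = (\<Sum>j\<in>S. \<Sum>i\<in>S. SG (ev j + (m - ev i)) (gam a m i :: 'a))"
    by (rule sum.swap)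
  finally have B: "Lsum S * Dmon S a m = (\<Sum>j\<in>S. \<Sum>i\<in>S. SG (ev j + (m - ev i)) (gam a m i :: 'a))" .
  have C: "(\<Sum>j\<in>S. \<Sum>i\<in>S. (if i = j then SG m (of_nat a - 1 - 2 * of_nat (LK m i)) else 0)) =
     (\<Sum>j\<in>S. SG m (of_nat a - 1 - 2 * of_nat (LK m j) :: 'a))"
    by (rule sum.cong) (auto simp: assms)
  have D: "(\<Sum>j\<in>S. SG m (of_nat a - 1 - 2 * of_nat (LK m j) :: 'a)) = SG m (kap S a (sdeg S m))"
    unfolding single_sum[symmetric]
    by (simp add: kap_def sdeg_def sum_subtractf sum_distrib_left assms)
  show ?thesis
    unfolding A B pair_id sum.distrib C D ..
qed

lemma commutator:
  assumes "finite S" "homS S k h"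
  shows "Dop S a (Lsum S * h) = Lsum S * Dop S a h + sc (kap S a k) (h :: 'a::comm_ring_1 mpoly)"
proof -
  have "\<forall>m\<in>KS h. sdeg S m = k" using assms by (simp add: homS_def)
  then show ?thesis
  proof (induction h rule: mpoly_induct_keys)
    case zero then show ?case by simp
  next
    case (single m c)
    have s: "SG m c = sc c (SG m (1::'a))" by (simp add: mult_single)
    have "Dop S a (Lsum S * SG m c) = sc c (Dop S a (Lsum S * SG m 1))"
      unfolding s by (simp add: Dop_sc[symmetric] mult.left_commute)
    also have "\<dots> = sc c (Lsum S * Dmon S a m + SG m (kap S a k))"
      by (subst comm_mon[OF assms(1)]) (simp add: single)
    also have "\<dots> = Lsum S * Dop S a (SG m c) + sc (kap S a k) (SG m c)"
      by (simp add: Dop_single distrib_left mult.left_commute mult_single mult.commute)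
    finally show ?case .
  next
    case (add p q) then show ?case by (simp add: Dop_add distrib_left distrib_right)
  qed
qed


lemma sc_add_coef: "sc c x + sc d x = sc (c + d) (x::'a::comm_ring_1 mpoly)"
  by (simp add: single_add distrib_right)

lemma Is:
  assumes fin: "finite S" and h: "homS S k (h :: 'a::comm_ring_1 mpoly)"
  shows "Dop S a (Lsum S ^ s * h) = Lsum S ^ s * Dop S a h
           + sc (of_nat s * (kap S a k - of_nat s + 1)) (Lsum S ^ (s - 1) * h)"
proof (induction s)
  case 0 then show ?case by simp
next
  case (Suc s)
  let ?L = "Lsum S :: 'a mpoly"
  define c where "c = (of_nat s * (kap S a k - of_nat s + 1) :: 'a)"
  have hs: "homS S (k + s) (?L ^ s * h)"
    using homS_mult[OF homS_pow[OF homS_Lsum[OF fin], of s] h] by (simp add: add.commute)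
  have kk: "kap S a (k + s) = (kap S a k - 2 * of_nat s :: 'a)"
    by (simp add: kap_def algebra_simps)
  have aux: "?L * sc c (?L ^ (s - 1) * h) = sc c (?L ^ s * h)"
  proof (cases s)
    case 0 then show ?thesis by (simp add: c_def)
  next
    case (Suc s') then show ?thesis by (simp add: mult.left_commute)
  qed
  have coef: "c + kap S a (k + s) = of_nat (Suc s) * (kap S a k - of_nat (Suc s) + 1)"
    unfolding kk c_def by (simp add: algebra_simps)
  have "Dop S a (?L ^ Suc s * h) = Dop S a (?L * (?L ^ s * h))" by (simp add: mult.assoc)
  also have "\<dots> = ?L * Dop S a (?L ^ s * h) + sc (kap S a (k + s)) (?L ^ s * h)"
    by (rule commutator[OF fin hs])
  also have "\<dots> = ?L * (?L ^ s * Dop S a h + sc c (?L ^ (s - 1) * h)) + sc (kap S a (k + s)) (?L ^ s * h)"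
    using Suc.IH by (simp add: c_def)
  also have "\<dots> = ?L ^ Suc s * Dop S a h + (sc c (?L ^ s * h) + sc (kap S a (k + s)) (?L ^ s * h))"
    using aux by (simp add: distrib_left mult.assoc)
  also have "\<dots> = ?L ^ Suc s * Dop S a h + sc (of_nat (Suc s) * (kap S a k - of_nat (Suc s) + 1)) (?L ^ (Suc s - 1) * h)"
    by (simp only: sc_add_coef coef diff_Suc_1)
  finally show ?case .
qed

lemma SLP:
  fixes Q :: "'a::field_char_0 mpoly set"
  assumes fin: "finite S" and a1: "1 \<le> a"
    and Qadd: "\<And>p q. p \<in> Q \<Longrightarrow> q \<in> Q \<Longrightarrow> p + q \<in> Q"
    and Qsc: "\<And>c p. p \<in> Q \<Longrightarrow> sc c p \<in> Q"
    and QL: "\<And>p. p \<in> Q \<Longrightarrow> Lsum S * p \<in> Q"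
    and QD: "\<And>p. p \<in> Q \<Longrightarrow> Dop S a p \<in> Q"
  shows "homS S k h \<Longrightarrow> s + 2 * k \<le> card S * (a - 1) \<Longrightarrow> Lsum S ^ s * h \<in> Q \<Longrightarrow> h \<in> Q"
proof (induction k arbitrary: h s rule: less_induct)
  case (less k h s)
  let ?L = "Lsum S :: 'a mpoly"
  let ?T = "card S * (a - 1)"
  have QLp: "p \<in> Q \<Longrightarrow> ?L ^ j * p \<in> Q" for p j
    by (induction j) (auto simp: mult.assoc intro: QL)
  have main: "s' + 2 * k \<le> ?T \<longrightarrow> ?L ^ s' * h \<in> Q \<longrightarrow> h \<in> Q" for s'
  proof (induction s')
    case 0 then show ?case by simp
  next
    case (Suc s)
    show ?case
    proof (intro impI)
      assume le: "Suc s + 2 * k \<le> ?T" and inQ: "?L ^ Suc s * h \<in> Q"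
      let ?w = "Dop S a h"
      define c where "c = (of_nat (Suc s) * (kap S a k - of_nat (Suc s) + 1) :: 'a)"
      have I: "Dop S a (?L ^ Suc s * h) = ?L ^ Suc s * ?w + sc c (?L ^ s * h)"
        using Is[OF fin less.prems(1), of a "Suc s"] by (simp add: c_def)
      have zQ: "0 \<in> Q" using Qsc[OF inQ, of 0] by simp
      have wQ: "?w \<in> Q"
      proof (cases k)
        case 0
        then have "?w = 0" using Dop_hom0[OF fin] less.prems(1) by simp
        then show ?thesis using zQ by simp
      next
        case (Suc k')
        have hw: "homS S k' ?w" using Dop_homS[OF fin less.prems(1)] Suc by simp
        have "?L * Dop S a (?L ^ Suc s * h) = ?L ^ Suc (Suc s) * ?w + sc c (?L ^ Suc s * h)"
          unfolding I by (simp add: distrib_left mult.left_commute mult.assoc)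
        then have "?L ^ Suc (Suc s) * ?w = ?L * Dop S a (?L ^ Suc s * h) + sc (- c) (?L ^ Suc s * h)"
          by (simp add: sc_add_coef[symmetric] algebra_simps single_uminus)
        moreover have "?L * Dop S a (?L ^ Suc s * h) + sc (- c) (?L ^ Suc s * h) \<in> Q"
          using inQ by (intro Qadd QL QD Qsc)
        ultimately have "?L ^ Suc (Suc s) * ?w \<in> Q" by simp
        moreover have "k' < k" "Suc (Suc s) + 2 * k' \<le> ?T" using Suc le by auto
        ultimately show "?w \<in> Q" using less.IH hw by blast
      qed
      have "sc c (?L ^ s * h) = Dop S a (?L ^ Suc s * h) + sc (-1) (?L ^ Suc s * ?w)"
        unfolding I by (simp add: single_uminus)
      moreover have "Dop S a (?L ^ Suc s * h) + sc (-1) (?L ^ Suc s * ?w) \<in> Q"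
        by (rule Qadd[OF QD[OF inQ] Qsc[OF QLp[OF wQ]]])
      ultimately have scQ: "sc c (?L ^ s * h) \<in> Q" by simp
      have T: "of_nat ?T = (of_nat (card S) * (of_nat a - 1) :: 'a)"
        using a1 by (simp add: of_nat_diff)
      have "kap S a k - of_nat (Suc s) + 1 = (of_nat (?T - 2 * k - s) :: 'a)"
        using le by (simp add: kap_def T[symmetric] of_nat_diff algebra_simps)
      then have "c = of_nat (Suc s) * of_nat (?T - 2 * k - s)" by (simp only: c_def)
      then have "c = of_nat (Suc s * (?T - 2 * k - s))" by (simp only: of_nat_mult)
      moreover have "Suc s * (?T - 2 * k - s) \<noteq> 0" using le by simp
      ultimately have cnz: "c \<noteq> 0" by (metis of_nat_eq_0_iff)
      have eq: "sc (inverse c) (sc c (?L ^ s * h)) = ?L ^ s * h"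
        using cnz by (simp add: sc_sc)
      have "?L ^ s * h \<in> Q" using Qsc[OF scQ, of "inverse c"] unfolding eq .
      then show "h \<in> Q" using Suc.IH le by simp
    qed
  qed
  show ?case using main less.prems by blast
qed

lemma dcomp_hom_id: "homS S t p \<Longrightarrow> dcomp S t p = p"
  by (rule poly_mapping_eqI) (auto simp: dcomp_def lookup_flt homS_def in_keys_iff)

lemma SLP_graded:
  fixes Q :: "'a::field_char_0 mpoly set"
  assumes fin: "finite S" and a1: "1 \<le> a"
    and Qadd: "\<And>p q. p \<in> Q \<Longrightarrow> q \<in> Q \<Longrightarrow> p + q \<in> Q"
    and Qsc: "\<And>c p. p \<in> Q \<Longrightarrow> sc c p \<in> Q"
    and QL: "\<And>p. p \<in> Q \<Longrightarrow> Lsum S * p \<in> Q"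
    and QD: "\<And>p. p \<in> Q \<Longrightarrow> Dop S a p \<in> Q"
    and Qc: "\<And>t p. p \<in> Q \<Longrightarrow> dcomp S t p \<in> Q"
    and hdeg: "\<forall>m\<in>KS h. sdeg S m \<le> K"
    and sK: "s + 2 * K \<le> card S * (a - 1)"
    and hQ: "Lsum S ^ s * h \<in> Q"
  shows "h \<in> Q"
proof -
  let ?L = "Lsum S :: 'a mpoly"
  have zQ: "0 \<in> Q" using Qsc[OF hQ, of 0] by simp
  have hL: "homS S s (?L ^ s)" using homS_pow[OF homS_Lsum[OF fin], of s] by simp
  have each: "dcomp S t h \<in> Q" if "t \<le> K" for t
  proof -
    have "dcomp S (t + s) (?L ^ s * h) = ?L ^ s * dcomp S t h"
      using comp_mult_hom[OF hL, of "t + s" h] by simp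
    then have "?L ^ s * dcomp S t h \<in> Q" using Qc[OF hQ, of "t + s"] by simp
    moreover have "s + 2 * t \<le> card S * (a - 1)" using sK that by simp
    ultimately show ?thesis
      using SLP[OF fin a1 Qadd Qsc QL QD homS_comp] by blast
  qed
  have "(\<Sum>t\<in>A. dcomp S t h) \<in> Q" if "A \<subseteq> {..K}" for A
    using that
  proof (induction A rule: infinite_finite_induct)
    case (infinite A) then show ?case using zQ by simp
  next
    case empty then show ?case using zQ by simp
  next
    case (insert x F) then show ?case using each by (simp add: Qadd)
  qed
  then show ?thesis using comp_decomp[OF hdeg] by (metis order_refl)
qed


lemma gi_zero: "0 \<in> gen_ideal n gs"
  unfolding gen_ideal_def by (auto intro!: exI[of _ "\<lambda>_. 0"])

lemma gi_add:
  assumes "p \<in> gen_ideal n gs" "q \<in> gen_ideal n gs"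
  shows "p + q \<in> gen_ideal n gs"
proof -
  obtain c where c: "p = (\<Sum>j<length gs. c j * gs ! j)" "\<forall>j<length gs. c j \<in> polys n"
    using assms(1) unfolding gen_ideal_def by blast
  obtain c' where c': "q = (\<Sum>j<length gs. c' j * gs ! j)" "\<forall>j<length gs. c' j \<in> polys n"
    using assms(2) unfolding gen_ideal_def by blast
  have "p + q = (\<Sum>j<length gs. (c j + c' j) * gs ! j)"
    using c c' by (simp add: distrib_right sum.distrib)
  moreover have "\<forall>j<length gs. c j + c' j \<in> polys n" using c c' by (auto intro: polys_add)
  ultimately show ?thesis unfolding gen_ideal_def by (intro CollectI exI[of _ "\<lambda>j. c j + c' j"]) simp
qed

lemma gi_gen:
  assumes "k < length gs" "u \<in> polys n"
  shows "u * gs ! k \<in> gen_ideal n gs"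
proof -
  let ?c = "\<lambda>j. if j = k then u else 0"
  have "(\<Sum>j<length gs. ?c j * gs ! j) = (\<Sum>j<length gs. if j = k then u * gs ! j else 0)"
    by (rule sum.cong) auto
  also have "\<dots> = u * gs ! k" using assms by (simp add: sum.delta')
  finally have "u * gs ! k = (\<Sum>j<length gs. ?c j * gs ! j)" by simp
  moreover have "\<forall>j<length gs. ?c j \<in> polys n" using assms by auto
  ultimately show ?thesis unfolding gen_ideal_def by (intro CollectI exI[of _ ?c]) simp
qed

definition gensI :: "nat \<Rightarrow> nat \<Rightarrow> 'a::comm_ring_1 mpoly list" where
  "gensI n a = map (\<lambda>i. mvar i ^ a) [0..<n] @ [(\<Sum>i<n. mvar i) ^ a]"

lemma I_na_gens: "I_na n a = gen_ideal n (gensI n a)"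
  by (simp add: I_na_def gensI_def)

lemma length_gensI[simp]: "length (gensI n a) = Suc n"
  by (simp add: gensI_def)

lemma gensI_nth: "j < n \<Longrightarrow> gensI n a ! j = mvar j ^ a"
  by (simp add: gensI_def nth_append)

lemma gensI_last: "gensI n a ! n = Lsum {..<n} ^ a"
  by (simp add: gensI_def nth_append Lsum_def)

lemma I_dec:
  assumes "p \<in> I_na n a"
  shows "\<exists>j u. j \<in> Jm n a \<and> j \<in> polys n \<and> u \<in> polys n \<and> p = j + u * Lsum {..<n} ^ a"
proof -
  obtain c where c: "p = (\<Sum>j<Suc n. c j * gensI n a ! j)" "\<forall>j<Suc n. c j \<in> polys n"
    using assms unfolding I_na_gens gen_ideal_def by auto
  have "p = (\<Sum>j<n. c j * gensI n a ! j) + c n * gensI n a ! n"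
    using c(1) by (simp only: sum.lessThan_Suc)
  also have "(\<Sum>j<n. c j * gensI n a ! j) = (\<Sum>j<n. c j * mvar j ^ a)"
    by (rule sum.cong) (auto simp: gensI_nth)
  finally have "p = (\<Sum>j<n. c j * mvar j ^ a) + c n * Lsum {..<n} ^ a"
    by (simp only: gensI_last)
  moreover have "(\<Sum>j<n. c j * mvar j ^ a) \<in> Jm n a"
    by (intro Jm_sum Jm_mult Jm_mvar_pow) simp
  moreover have "(\<Sum>j<n. c j * mvar j ^ a) \<in> polys n"
    using c(2) by (intro polys_sum polys_mult polys_pow polys_mvar) auto
  moreover have "c n \<in> polys n" using c(2) by simp
  ultimately show ?thesis by blast
qed

lemma keys_minus_nat_subset: "KS ((m::nat \<Rightarrow>\<^sub>0 nat) - m') \<subseteq> KS m"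
  by (auto simp: in_keys_iff lookup_minus)

lemma minus_single_add: assumes "(a::nat) \<le> LK m i" shows "m - SG i a + SG i a = m"
  by (rule poly_mapping_eqI) (use assms in \<open>auto simp: lookup_add lookup_minus lookup_single when_def\<close>)
lemma single_split: assumes "(a::nat) \<le> LK m i" shows "SG m v = SG (m - SG i a) v * (mvar i ^ a :: 'a::comm_ring_1 mpoly)"
proof -
  have "SG (m - SG i a) v * (mvar i ^ a :: 'a::comm_ring_1 mpoly) = SG (m - SG i a + SG i a) v"
    by (simp add: mvar_pow mult_single)
  then show ?thesis using minus_single_add[OF assms] by simp
qed

lemma Jm_in_I:
  fixes j :: "'a::comm_ring_1 mpoly"
  assumes "j \<in> Jm n a" "j \<in> polys n"
  shows "j \<in> I_na n a"
proof -
  have single_in: "SG m v \<in> I_na n a" if mK: "m \<in> KS j" for m and v :: 'a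
  proof -
    obtain i where i: "i < n" "a \<le> LK m i" using assms(1) mK unfolding Jm_def by blast
    have km: "KS m \<subseteq> {..<n}" using assms(2) mK by (auto simp: polys_def)
    have g: "gensI n a ! i = (mvar i ^ a :: 'a mpoly)" by (rule gensI_nth[OF i(1)])
    have e: "SG m v = SG (m - SG i a) v * gensI n a ! i"
      unfolding g by (rule single_split[OF i(2)])
    have p: "SG (m - SG i a) v \<in> polys n"
      by (rule polys_single) (use km keys_minus_nat_subset[of m "SG i a"] in blast)
    have "SG (m - SG i a) v * gensI n a ! i \<in> gen_ideal n (gensI n a)"
      by (rule gi_gen) (use i p in auto)
    then show ?thesis unfolding e I_na_gens .
  qed
  have "A \<subseteq> KS j \<Longrightarrow> (\<Sum>m\<in>A. SG m (LK j m)) \<in> I_na n a" for A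
  proof (induction A rule: infinite_finite_induct)
    case (infinite A) then show ?case by (simp add: I_na_gens gi_zero)
  next
    case empty then show ?case by (simp add: I_na_gens gi_zero)
  next
    case (insert x F)
    then have "SG x (LK j x) \<in> I_na n a" "(\<Sum>m\<in>F. SG m (LK j m)) \<in> I_na n a"
      using single_in by auto
    then have "SG x (LK j x) + (\<Sum>m\<in>F. SG m (LK j m)) \<in> I_na n a"
      unfolding I_na_gens by (rule gi_add)
    then show ?case using insert by simp
  qed
  from this[OF order_refl] show ?thesis by (simp only: poly_sum_singles[symmetric])
qed

lemma I_mem:
  assumes "j \<in> Jm n a" "j \<in> polys n" "u \<in> polys n"
  shows "j + u * Lsum {..<n} ^ a \<in> I_na n a"
proof -
  have "u * Lsum {..<n} ^ a \<in> I_na n a"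
    using gi_gen[of n "gensI n a" u n] assms(3) by (simp add: I_na_gens gensI_last)
  then show ?thesis using Jm_in_I[OF assms(1,2)] by (simp add: I_na_gens gi_add)
qed

lemma mon_deg_sdeg: "KS m \<subseteq> {..<n} \<Longrightarrow> mon_deg m = sdeg {..<n} m"
  unfolding mon_deg_def sdeg_def
  by (rule sum.mono_neutral_left) (auto simp: in_keys_iff)

lemma homog_homS:
  assumes "p \<in> homog n k" shows "homS {..<n} k p"
  unfolding homS_def
proof
  fix m assume m: "m \<in> KS p"
  then have "KS m \<subseteq> {..<n}" "mon_deg m = k" using assms by (auto simp: homog_def polys_def)
  then show "sdeg {..<n} m = k" using mon_deg_sdeg by metis
qed

lemma sdeg_mono: "S \<subseteq> T \<Longrightarrow> finite T \<Longrightarrow> sdeg S m \<le> sdeg T m"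
  unfolding sdeg_def by (rule sum_mono2) auto

lemma polys_flt: "p \<in> polys n \<Longrightarrow> flt P p \<in> polys n"
  unfolding polys_def using keys_flt by blast

lemma homS_Lsum_sub: "finite T \<Longrightarrow> S \<subseteq> T \<Longrightarrow> homS T 1 (Lsum S)"
  unfolding Lsum_def by (intro homS_sum) (metis homS_single mvar_ev sdeg_ev subsetD)

lemma Lsum_split: "N \<le> n \<Longrightarrow> Lsum {..<n} = Lsum {..<N} + Lsum {N..<n}"
  unfolding Lsum_def lessThan_atLeast0 by (simp add: sum.atLeastLessThan_concat)

lemma keys_Lsum: "m \<in> KS (Lsum S :: 'a::comm_ring_1 mpoly) \<Longrightarrow> \<exists>i\<in>S. m = ev i"
proof -
  assume "m \<in> KS (Lsum S :: 'a mpoly)"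
  then have "m \<in> (\<Union>i\<in>S. KS (mvar i :: 'a mpoly))"
    using keys_sum[of "\<lambda>i. mvar i :: 'a mpoly" S] unfolding Lsum_def by auto
  then obtain i where "i \<in> S" "m \<in> KS (mvar i :: 'a mpoly)" by blast
  then show ?thesis by (auto simp: mvar_ev split: if_splits)
qed
lemma keys_ev: "KS (ev i) = {i}"
  by (simp add: ev_def)

lemma Lsum_disj: "\<forall>m\<in>KS (Lsum {..<N} :: 'a::comm_ring_1 mpoly). KS m \<inter> {N..<n} = {}"
proof
  fix m assume "m \<in> KS (Lsum {..<N} :: 'a mpoly)"
  then obtain i where "i \<in> {..<N}" "m = ev i" using keys_Lsum by blast
  then show "KS m \<inter> {N..<n} = {}" by (simp add: keys_ev)
qed

lemma claimA:
  fixes h :: "'a::field_char_0 mpoly"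
  assumes a1: "1 \<le> a" and d1: "1 \<le> d" and hN: "2 * d \<le> N * (a - 1)"
    and hdeg: "\<forall>m\<in>KS h. sdeg {..<N} m \<le> d - 1"
    and hQ: "Lsum {..<N} * h \<in> Jm n a"
  shows "h \<in> Jm n a"
proof (rule SLP_graded[where S="{..<N}" and a=a and K="d - 1" and s=1])
  show "finite {..<N}" by simp
  show "1 \<le> a" by fact
  show "\<And>p q. p \<in> Jm n a \<Longrightarrow> q \<in> Jm n a \<Longrightarrow> p + q \<in> Jm n a" by (rule Jm_add)
  show "\<And>c p. p \<in> Jm n a \<Longrightarrow> sc c p \<in> Jm n a" by (rule Jm_mult)
  show "\<And>p. p \<in> Jm n a \<Longrightarrow> Lsum {..<N} * p \<in> Jm n a" by (rule Jm_mult)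
  show "\<And>p. p \<in> Jm n a \<Longrightarrow> Dop {..<N} a p \<in> Jm n a" by (rule Dop_Jm)
  show "\<And>t p. p \<in> Jm n a \<Longrightarrow> dcomp {..<N} t p \<in> Jm n a" by (simp add: dcomp_def Jm_flt)
  show "\<forall>m\<in>KS h. sdeg {..<N} m \<le> d - 1" by fact
  have "1 + 2 * (d - 1) \<le> 2 * d" using d1 by linarith
  then show "1 + 2 * (d - 1) \<le> card {..<N} * (a - 1)" using hN by (simp only: card_lessThan)
  show "Lsum {..<N} ^ 1 * h \<in> Jm n a" using hQ by simp
qed

definition Q2 :: "nat \<Rightarrow> nat \<Rightarrow> nat \<Rightarrow> 'a::comm_ring_1 mpoly set" where
  "Q2 N n a = {Lsum {..<N} * u + j | u j. j \<in> Jm n a}"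

lemma Q2E: "(p::'a::comm_ring_1 mpoly) \<in> Q2 N n a \<Longrightarrow> \<exists>u j. p = Lsum {..<N} * u + j \<and> j \<in> Jm n a"
  unfolding Q2_def by simp

lemma Q2I: "j \<in> Jm n a \<Longrightarrow> Lsum {..<N} * u + j \<in> Q2 N n a"
  unfolding Q2_def by blast

lemma claimB:
  fixes g :: "'a::field_char_0 mpoly"
  assumes a1: "1 \<le> a" and ad: "a \<le> d" and hm: "2 * d - 1 \<le> (n - N) * (a - 1)"
    and gdeg: "\<forall>m\<in>KS g. sdeg {N..<n} m \<le> d - a"
    and gQ: "Lsum {N..<n} ^ a * g \<in> Q2 N n a"
  shows "g \<in> Q2 N n a"
proof (rule SLP_graded[where S="{N..<n}" and a=a and K="d - a" and s=a])
  let ?L1 = "Lsum {..<N} :: 'a mpoly"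
  let ?L2 = "Lsum {N..<n} :: 'a mpoly"
  show "finite {N..<n}" by simp
  show "1 \<le> a" by fact
  show "p + q \<in> Q2 N n a" if hp: "p \<in> Q2 N n a" "q \<in> Q2 N n a" for p q :: "'a mpoly"
  proof -
    obtain u j u' j' :: "'a mpoly" where "p = ?L1 * u + j" "j \<in> Jm n a" "q = ?L1 * u' + j'" "j' \<in> Jm n a"
      using Q2E[OF hp(1)] Q2E[OF hp(2)] by blast
    then have "p + q = ?L1 * (u + u') + (j + j')" "j + j' \<in> Jm n a"
      by (auto simp: algebra_simps intro: Jm_add)
    then show ?thesis by (auto intro: Q2I)
  qed
  show "sc c p \<in> Q2 N n a" if hp: "p \<in> Q2 N n a" for c :: 'a and p :: "'a mpoly"
  proof -
    obtain u j :: "'a mpoly" where e: "p = ?L1 * u + j" "j \<in> Jm n a" using Q2E[OF hp] by blast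
    have "sc c p = ?L1 * (sc c u) + sc c j" unfolding e by (simp add: algebra_simps)
    moreover have "sc c j \<in> Jm n a" using e by (intro Jm_mult)
    ultimately show ?thesis by (auto intro: Q2I)
  qed
  show "?L2 * p \<in> Q2 N n a" if hp: "p \<in> Q2 N n a" for p :: "'a mpoly"
  proof -
    obtain u j :: "'a mpoly" where e: "p = ?L1 * u + j" "j \<in> Jm n a" using Q2E[OF hp] by blast
    have "?L2 * p = ?L1 * (?L2 * u) + ?L2 * j" unfolding e by (simp add: algebra_simps)
    moreover have "?L2 * j \<in> Jm n a" using e by (intro Jm_mult)
    ultimately show ?thesis by (auto intro: Q2I)
  qed
  show "Dop {N..<n} a p \<in> Q2 N n a" if hp: "p \<in> Q2 N n a" for p :: "'a mpoly"
  proof -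
    obtain u j :: "'a mpoly" where e: "p = ?L1 * u + j" "j \<in> Jm n a" using Q2E[OF hp] by blast
    have "Dop {N..<n} a p = Dop {N..<n} a (?L1 * u) + Dop {N..<n} a j" unfolding e by (rule Dop_add)
    also have "Dop {N..<n} a (?L1 * u) = ?L1 * Dop {N..<n} a u" by (rule Dop_mult_disj[OF Lsum_disj])
    finally have "Dop {N..<n} a p = ?L1 * Dop {N..<n} a u + Dop {N..<n} a j" .
    moreover have "Dop {N..<n} a j \<in> Jm n a" using e by (intro Dop_Jm)
    ultimately show ?thesis by (auto intro: Q2I)
  qed
  show "dcomp {N..<n} t p \<in> Q2 N n a" if hp: "p \<in> Q2 N n a" for t and p :: "'a mpoly"
  proof -
    obtain u j :: "'a mpoly" where e: "p = ?L1 * u + j" "j \<in> Jm n a" using Q2E[OF hp] by blast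
    have h0: "homS {N..<n} 0 ?L1" by (rule homS_Lsum0) auto
    have "dcomp {N..<n} t p = dcomp {N..<n} t (?L1 * u) + dcomp {N..<n} t j"
      unfolding e dcomp_def by (rule flt_add)
    also have "dcomp {N..<n} t (?L1 * u) = ?L1 * dcomp {N..<n} t u"
      using comp_mult_hom[OF h0, of t u] by simp
    finally have "dcomp {N..<n} t p = ?L1 * dcomp {N..<n} t u + dcomp {N..<n} t j" .
    moreover have "dcomp {N..<n} t j \<in> Jm n a" unfolding dcomp_def using e by (intro Jm_flt)
    ultimately show ?thesis by (auto intro: Q2I)
  qed
  show "\<forall>m\<in>KS g. sdeg {N..<n} m \<le> d - a" by fact
  have "a + 2 * (d - a) \<le> 2 * d - 1" using ad a1 by linarith
  then show "a + 2 * (d - a) \<le> card {N..<n} * (a - 1)" using hm by (simp only: card_atLeastLessThan)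
  show "?L2 ^ a * g \<in> Q2 N n a" by fact
qed


lemma Jm_rn: "j \<in> Jm n a \<Longrightarrow> rn n' j \<in> Jm n a"
  unfolding rn_def by (rule Jm_flt)

lemma Jm_dcomp: "j \<in> Jm n a \<Longrightarrow> dcomp S t j \<in> Jm n a"
  unfolding dcomp_def by (rule Jm_flt)

lemma polys_dcomp: "p \<in> polys n \<Longrightarrow> dcomp S t p \<in> polys n"
  unfolding dcomp_def by (rule polys_flt)

lemma dcomp_add: "dcomp S t (p + q) = dcomp S t p + dcomp S t q"
  unfolding dcomp_def by (rule flt_add)

lemma dcomp_diff: "dcomp S t (p - q) = dcomp S t p - dcomp S t q"
  unfolding dcomp_def by (rule flt_diff)

lemma inj_main:
  fixes f :: "'a::field_char_0 mpoly"
  assumes Nn: "N \<le> n" and a2: "2 \<le> a" and ad: "a \<le> d"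
    and hN: "2 * d \<le> N * (a - 1)" and hm: "2 * d - 1 \<le> (n - N) * (a - 1)"
    and f: "f \<in> homog n (d - 1)" and fI: "Lsum {..<N} * f \<in> I_na n a"
  shows "f \<in> I_na n a"
proof -
  let ?T = "{..<n}"
  let ?L = "Lsum ?T :: 'a mpoly"
  let ?L1 = "Lsum {..<N} :: 'a mpoly"
  let ?L2 = "Lsum {N..<n} :: 'a mpoly"
  have a1: "1 \<le> a" and d1: "1 \<le> d" using a2 ad by auto
  have fp: "f \<in> polys n" using f by (simp add: homog_def)
  have fh: "homS ?T (d - 1) f" using f by (rule homog_homS)
  have L1p: "?L1 \<in> polys n" using Nn by (intro polys_Lsum) auto
  have hL1T: "homS ?T 1 ?L1" using Nn by (intro homS_Lsum_sub) auto
  have hLa: "homS ?T a (?L ^ a)" using homS_pow[OF homS_Lsum[of ?T], of a] by simp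
  obtain j0 u0 where j0: "j0 \<in> Jm n a" "j0 \<in> polys n" "u0 \<in> polys n"
    and e0: "?L1 * f = j0 + u0 * ?L ^ a"
    using I_dec[OF fI] by blast
  have hd: "homS ?T d (?L1 * f)"
    using homS_mult[OF hL1T fh] d1 by simp
  define j1 where "j1 = dcomp ?T d j0"
  define g where "g = dcomp ?T (d - a) u0"
  have j1J: "j1 \<in> Jm n a" unfolding j1_def by (rule Jm_dcomp[OF j0(1)])
  have j1p: "j1 \<in> polys n" unfolding j1_def using j0 by (intro polys_dcomp)
  have gp: "g \<in> polys n" unfolding g_def using j0 by (intro polys_dcomp)
  have gh: "homS ?T (d - a) g" unfolding g_def by (rule homS_comp)
  have e1: "?L1 * f = j1 + ?L ^ a * g"
  proof -
    have "?L1 * f = dcomp ?T d (?L1 * f)" using dcomp_hom_id[OF hd] by simp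
    also have "\<dots> = dcomp ?T d j0 + dcomp ?T d (?L ^ a * u0)"
      unfolding e0 by (simp add: dcomp_add mult.commute)
    also have "dcomp ?T d (?L ^ a * u0) = ?L ^ a * g"
      using comp_mult_hom[OF hLa, of d u0] ad by (simp add: g_def)
    finally show ?thesis by (simp add: j1_def)
  qed
  have Lsplit: "?L = ?L1 + ?L2" using Lsum_split[OF Nn] by simp
  define R where "R = (\<Sum>i<a. ?L2 ^ (a - Suc i) * ?L ^ i)"
  have R: "?L ^ a = ?L2 ^ a + ?L1 * R"
  proof -
    have "?L ^ a - ?L2 ^ a = (?L - ?L2) * R" unfolding R_def by (rule power_diff_sumr2)
    also have "?L - ?L2 = ?L1" using Lsplit by simp
    finally show ?thesis by (simp add: algebra_simps)
  qed
  have "?L2 ^ a * g = ?L1 * (f - R * g) + (- j1)"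
    using e1 R by (simp add: algebra_simps)
  moreover have "?L1 * (f - R * g) + (- j1) \<in> Q2 N n a"
    by (rule Q2I[OF Jm_uminus[OF j1J]])
  ultimately have gQ: "?L2 ^ a * g \<in> Q2 N n a" by (simp only:)
  have gdeg: "\<forall>m\<in>KS g. sdeg {N..<n} m \<le> d - a"
  proof
    fix m assume "m \<in> KS g"
    then have "sdeg ?T m = d - a" using gh by (simp add: homS_def)
    moreover have "sdeg {N..<n} m \<le> sdeg ?T m" by (rule sdeg_mono) auto
    ultimately show "sdeg {N..<n} m \<le> d - a" by simp
  qed
  have "g \<in> Q2 N n a" by (rule claimB[OF a1 ad hm gdeg gQ])
  then obtain u j2 :: "'a mpoly" where g2: "g = ?L1 * u + j2" "j2 \<in> Jm n a"
    using Q2E by blast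
  define u' where "u' = rn n u"
  define j2' where "j2' = rn n j2"
  have u'p: "u' \<in> polys n" unfolding u'_def by (rule rn_polys)
  have j2'J: "j2' \<in> Jm n a" unfolding j2'_def using g2 by (intro Jm_rn)
  have g3: "g = ?L1 * u' + j2'"
  proof -
    have "g = rn n g" using gp by (simp add: rn_id)
    also have "\<dots> = rn n ?L1 * rn n u + rn n j2" unfolding g2 by (simp add: rn_add rn_mult)
    finally show ?thesis using L1p by (simp add: rn_id u'_def j2'_def)
  qed
  define h where "h = f - ?L ^ a * u'"
  have hp: "h \<in> polys n" unfolding h_def
    using fp u'p by (intro polys_diff polys_mult polys_pow polys_Lsum) auto
  have "?L1 * h = j1 + ?L ^ a * j2'"
    unfolding h_def using e1 g3 by (simp add: algebra_simps)
  then have L1h: "?L1 * h \<in> Jm n a"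
    using j1J j2'J by (simp add: Jm_add Jm_mult)
  define h' where "h' = dcomp ?T (d - 1) h"
  have "dcomp ?T d (?L1 * h) = ?L1 * h'"
    using comp_mult_hom[OF hL1T, of d h] d1 by (simp add: h'_def)
  then have L1h': "?L1 * h' \<in> Jm n a" using Jm_dcomp[OF L1h, of ?T d] by simp
  have h'deg: "\<forall>m\<in>KS h'. sdeg {..<N} m \<le> d - 1"
  proof
    fix m assume "m \<in> KS h'"
    then have "sdeg ?T m = d - 1" using homS_comp[of ?T "d - 1" h] by (simp add: homS_def h'_def)
    moreover have "sdeg {..<N} m \<le> sdeg ?T m" using Nn by (intro sdeg_mono) auto
    ultimately show "sdeg {..<N} m \<le> d - 1" by simp
  qed
  have h'J: "h' \<in> Jm n a" by (rule claimA[OF a1 d1 hN h'deg L1h'])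
  have h'p: "h' \<in> polys n" unfolding h'_def using hp by (rule polys_dcomp)
  define u'' where "u'' = (if a \<le> d - 1 then dcomp ?T (d - 1 - a) u' else 0)"
  have u''p: "u'' \<in> polys n" unfolding u''_def using u'p by (auto intro: polys_dcomp)
  have "h' = f - u'' * ?L ^ a"
  proof -
    have "h' = dcomp ?T (d - 1) f - dcomp ?T (d - 1) (?L ^ a * u')"
      unfolding h'_def h_def by (rule dcomp_diff)
    also have "dcomp ?T (d - 1) f = f" by (rule dcomp_hom_id[OF fh])
    also have "dcomp ?T (d - 1) (?L ^ a * u') = u'' * ?L ^ a"
      using comp_mult_hom[OF hLa, of "d - 1" u'] by (simp add: u''_def mult.commute)
    finally show ?thesis .
  qed
  then have "f = h' + u'' * ?L ^ a" by simp
  then show ?thesis using I_mem[OF h'J h'p u''p] by simp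
qed


lemma vs_mpoly: "vector_space (\<lambda>(c::'a::field) (p::'a mpoly). SG 0 c * p)"
  by unfold_locales (simp_all add: distrib_left distrib_right single_add mult.assoc[symmetric] mult_single)

lemma vs_field: "vector_space ((*) :: 'a::field \<Rightarrow> 'a \<Rightarrow> 'a)"
  by unfold_locales (simp_all add: algebra_simps)

interpretation mv: vector_space "\<lambda>(c::'a::field) (p::'a mpoly). SG 0 c * p"
  by (rule vs_mpoly)

interpretation mvp: vector_space_pair "\<lambda>(c::'a::field) (p::'a mpoly). SG 0 c * p" "(*) :: 'a \<Rightarrow> 'a \<Rightarrow> 'a"
  by (simp add: vector_space_pair_def vs_mpoly vs_field)

lemma hom_mpeval: "comm_ring_hom (\<lambda>p. mpeval p c)"
  by unfold_locales (simp_all add: mpeval_add mpeval_mult)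

lemma hom_rn: "comm_ring_hom (rn n)"
  by unfold_locales (simp_all add: rn_add rn_mult)

lemma sum_set_nth:
  assumes "distinct xs"
  shows "(\<Sum>x\<in>set xs. F x) = (\<Sum>j<length xs. F (xs ! j))"
proof -
  have inj: "inj_on (nth xs) {..<length xs}" using assms by (simp add: inj_on_nth)
  have "set xs = nth xs ` {..<length xs}" by (auto simp: set_conv_nth)
  then show ?thesis using sum.reindex[OF inj, of F] by simp
qed

lemma mon_eval_ev: "mon_eval (ev k) c = c k"
  unfolding ev_def by (rule mon_eval_var)

lemma lin_form_mult: "lin_form n c * p = (\<Sum>k<n. sc (c k) (mvar k * p))"
  unfolding lin_form_def sum_distrib_right
  by (rule sum.cong) (simp_all add: mvar_def mult_single mult.assoc[symmetric])

lemma lf_in: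
  assumes "mv.subspace S" "\<forall>k<n. mvar k * p \<in> S"
  shows "lin_form n c * p \<in> S"
  unfolding lin_form_mult using assms
  by (intro mv.subspace_sum mv.subspace_scale) auto

lemma linear_mh: "Vector_Spaces.linear (\<lambda>(c::'a::field) (p::'a mpoly). SG 0 c * p) (*) phi
   \<Longrightarrow> module_hom (\<lambda>(c::'a::field) (p::'a mpoly). SG 0 c * p) (*) phi"
  by (simp add: module_hom_iff_linear)

lemma phi_lin_form:
  assumes "Vector_Spaces.linear (\<lambda>(c::'a::field) (p::'a mpoly). SG 0 c * p) (*) phi"
  shows "phi (lin_form n c * p) = (\<Sum>k<n. phi (mvar k * p) * c k)"
proof -
  note mh = linear_mh[OF assms]
  have "phi (lin_form n c * p) = (\<Sum>k<n. phi (sc (c k) (mvar k * p)))"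
    unfolding lin_form_mult by (rule module_hom.sum[OF mh])
  also have "\<dots> = (\<Sum>k<n. phi (mvar k * p) * c k)"
  proof (rule sum.cong)
    fix k
    have "phi (sc (c k) (mvar k * p)) = c k * phi (mvar k * p)"
      by (rule module_hom.scale[OF mh])
    then show "phi (sc (c k) (mvar k * p)) = phi (mvar k * p) * c k" by (simp only: mult.commute)
  qed simp
  finally show ?thesis .
qed

lemma semicont:
  fixes V W I :: "'a::field mpoly set"
  assumes finBv: "finite Bv" and Vspan: "V \<subseteq> mv.span Bv"
    and finBw: "finite Bw" and Wspan: "W \<subseteq> mv.span Bw"
    and sV: "mv.subspace V" and sW: "mv.subspace W" and sI: "mv.subspace I"
    and Mk: "\<forall>f\<in>V. \<forall>k<n. mvar k * f \<in> W"
    and Imult: "\<forall>f\<in>I. \<forall>k<n. mvar k * f \<in> I"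
    and good: "\<forall>f\<in>V. lin_form n c0 * f \<in> I \<longrightarrow> f \<in> I"
  shows "\<exists>g. g \<in> polys n \<and> mpeval g c0 \<noteq> 0 \<and>
           (\<forall>c. mpeval g c \<noteq> 0 \<longrightarrow> (\<forall>f\<in>V. lin_form n c * f \<in> I \<longrightarrow> f \<in> I))"
proof -
  let ?A = "\<lambda>p. lin_form n c0 * p"
  define KV where "KV = I \<inter> V"
  define KW where "KW = I \<inter> W"
  have sKV: "mv.subspace KV" unfolding KV_def using sI sV by (rule mv.subspace_inter)
  have sKW: "mv.subspace KW" unfolding KW_def using sI sW by (rule mv.subspace_inter)
  obtain BI where BI: "BI \<subseteq> KV" "mv.independent BI" "KV \<subseteq> mv.span BI"
    by (rule mv.maximal_independent_subset[of KV])
  have BIV: "BI \<subseteq> V" using BI(1) by (auto simp: KV_def)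
  obtain B where B: "BI \<subseteq> B" "B \<subseteq> V" "mv.independent B" "V \<subseteq> mv.span B"
    by (rule mv.maximal_independent_subset_extend[OF BIV BI(2)])
  have finB: "finite B" using mv.independent_span_bound[OF finBv B(3)] B(2) Vspan by blast
  have finBI: "finite BI" using finB B(1) finite_subset by blast
  define X where "X = B - BI"
  have finX: "finite X" unfolding X_def using finB by simp
  have XV: "X \<subseteq> V" unfolding X_def using B(2) by blast
  have BXI: "B = X \<union> BI" "X \<inter> BI = {}" unfolding X_def using B(1) by auto
  obtain BW where BW: "BW \<subseteq> KW" "mv.independent BW" "KW \<subseteq> mv.span BW"
    by (rule mv.maximal_independent_subset[of KW])
  have finBW: "finite BW"
    using mv.independent_span_bound[OF finBw BW(2)] BW(1) Wspan by (auto simp: KW_def)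
  have spanBI: "mv.span BI \<subseteq> KV" by (rule mv.span_minimal[OF BI(1) sKV])
  have BWI: "BW \<subseteq> I" using BW(1) by (auto simp: KW_def)
  have KF: "(\<forall>x\<in>X. lam x = 0) \<and> (\<forall>b\<in>BW. mu b = 0)"
    if eq: "(\<Sum>x\<in>X. sc (lam x) (?A x)) + (\<Sum>b\<in>BW. sc (mu b) b) = 0" for lam mu
  proof -
    define v where "v = (\<Sum>x\<in>X. sc (lam x) x)"
    have vV: "v \<in> V" unfolding v_def using XV by (intro mv.subspace_sum[OF sV] mv.subspace_scale[OF sV]) auto
    have Av: "?A v = (\<Sum>x\<in>X. sc (lam x) (?A x))"
      unfolding v_def by (simp add: sum_distrib_left mult.left_commute)
    have sumI: "(\<Sum>b\<in>BW. sc (mu b) b) \<in> I"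
      using BWI by (intro mv.subspace_sum[OF sI] mv.subspace_scale[OF sI]) auto
    have "?A v = - (\<Sum>b\<in>BW. sc (mu b) b)" using eq Av by (simp add: eq_neg_iff_add_eq_0)
    then have "?A v \<in> I" using mv.subspace_neg[OF sI sumI] by simp
    then have "v \<in> I" using good vV by blast
    then have "v \<in> mv.span BI" using vV BI(3) by (auto simp: KV_def)
    then obtain nu where nu: "v = (\<Sum>b\<in>BI. sc (nu b) b)"
      using mv.span_finite[OF finBI] by auto
    define u where "u = (\<lambda>y. if y \<in> X then lam y else - nu y)"
    have "(\<Sum>y\<in>B. sc (u y) y) = (\<Sum>y\<in>X. sc (u y) y) + (\<Sum>y\<in>BI. sc (u y) y)"
      unfolding BXI(1) by (rule sum.union_disjoint[OF finX finBI BXI(2)])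
    also have "(\<Sum>y\<in>X. sc (u y) y) = v" unfolding v_def u_def by (rule sum.cong) auto
    also have "(\<Sum>y\<in>BI. sc (u y) y) = - v"
    proof -
      have "(\<Sum>y\<in>BI. sc (u y) y) = (\<Sum>y\<in>BI. - sc (nu y) y)"
        unfolding u_def using BXI(2) by (intro sum.cong) (auto simp: single_uminus)
      then show ?thesis unfolding nu by (simp add: sum_negf)
    qed
    finally have "(\<Sum>y\<in>B. sc (u y) y) = 0" by simp
    then have u0: "\<forall>y\<in>B. u y = 0"
      using B(3) mv.dependent_finite[OF finB, THEN iffD2, OF exI[of _ u]] by blast
    have lam0: "\<forall>x\<in>X. lam x = 0"
    proof
      fix x assume xX: "x \<in> X"
      then have "u x = 0" using u0 BXI(1) by blast
      then show "lam x = 0" using xX by (simp add: u_def)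
    qed
    then have "(\<Sum>x\<in>X. sc (lam x) (?A x)) = 0" by simp
    then have "(\<Sum>b\<in>BW. sc (mu b) b) = 0" using eq by simp
    then have "\<forall>b\<in>BW. mu b = 0"
      using BW(2) mv.dependent_finite[OF finBW, THEN iffD2, OF exI[of _ mu]] by blast
    then show ?thesis using lam0 by blast
  qed
  have delta: "(\<Sum>z\<in>X. sc (if z = x then 1 else 0) (?A z)) = ?A x" if "x \<in> X" for x
  proof -
    have "(\<Sum>z\<in>X. sc (if z = x then 1 else 0) (?A z)) = (\<Sum>z\<in>X. if z = x then ?A z else 0)"
      by (rule sum.cong) auto
    also have "\<dots> = ?A x" using that finX by (simp add: sum.delta')
    finally show ?thesis .
  qed
  have deltaW: "(\<Sum>z\<in>BW. sc (if z = b then 1 else 0) z) = b" if "b \<in> BW" for b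
  proof -
    have "(\<Sum>z\<in>BW. sc (if z = b then 1 else 0) z) = (\<Sum>z\<in>BW. if z = b then z else 0)"
      by (rule sum.cong) auto
    also have "\<dots> = b" using that finBW by (simp add: sum.delta')
    finally show ?thesis .
  qed
  have injA: "inj_on ?A X"
  proof (rule inj_onI)
    fix x y assume xy: "x \<in> X" "y \<in> X" "?A x = ?A y"
    show "x = y"
    proof (rule ccontr)
      assume ne: "x \<noteq> y"
      define lam where "lam = (\<lambda>z. (if z = x then 1 else 0) - (if z = y then (1::'a) else 0))"
      have "(\<Sum>z\<in>X. sc (lam z) (?A z)) =
              (\<Sum>z\<in>X. sc (if z = x then 1 else 0) (?A z)) - (\<Sum>z\<in>X. sc (if z = y then 1 else 0) (?A z))"
        unfolding lam_def by (simp add: single_diff left_diff_distrib sum_subtractf)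
      also have "\<dots> = 0" using delta[OF xy(1)] delta[OF xy(2)] xy(3) by simp
      finally have "(\<Sum>z\<in>X. sc (lam z) (?A z)) + (\<Sum>b\<in>BW. sc 0 b) = 0" by simp
      then have "lam x = 0" using KF[of lam "\<lambda>b. 0"] xy(1) by blast
      then show False using ne by (simp add: lam_def)
    qed
  qed
  have disj: "?A ` X \<inter> BW = {}"
  proof (rule ccontr)
    assume "?A ` X \<inter> BW \<noteq> {}"
    then obtain x where x: "x \<in> X" "?A x \<in> BW" by blast
    define lam where "lam = (\<lambda>z. if z = x then 1 else (0::'a))"
    define mu where "mu = (\<lambda>z. if z = ?A x then -1 else (0::'a))"
    have "(\<Sum>z\<in>BW. sc (mu z) z) = (\<Sum>z\<in>BW. - sc (if z = ?A x then 1 else 0) z)"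
      unfolding mu_def by (rule sum.cong) (auto simp: single_uminus)
    also have "\<dots> = - (\<Sum>z\<in>BW. sc (if z = ?A x then 1 else 0) z)"
      by (rule sum_negf)
    finally have "(\<Sum>z\<in>BW. sc (mu z) z) = - (\<Sum>z\<in>BW. sc (if z = ?A x then 1 else 0) z)" .
    then have "(\<Sum>z\<in>X. sc (lam z) (?A z)) + (\<Sum>z\<in>BW. sc (mu z) z) = 0"
      using delta[OF x(1)] deltaW[OF x(2)] unfolding lam_def by simp
    then have "lam x = 0" using KF x(1) by blast
    then show False by (simp add: lam_def)
  qed
  define Z where "Z = ?A ` X \<union> BW"
  have finZ: "finite Z" unfolding Z_def using finX finBW by simp
  have indZ: "mv.independent Z"
  proof (rule mv.independent_if_scalars_zero[OF finZ])
    fix f z assume s0: "(\<Sum>z\<in>Z. sc (f z) z) = 0" and zZ: "z \<in> Z"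
    have "(\<Sum>z\<in>Z. sc (f z) z) = (\<Sum>z\<in>?A ` X. sc (f z) z) + (\<Sum>z\<in>BW. sc (f z) z)"
      unfolding Z_def using finX finBW disj by (intro sum.union_disjoint) auto
    also have "(\<Sum>z\<in>?A ` X. sc (f z) z) = (\<Sum>x\<in>X. sc (f (?A x)) (?A x))"
      by (rule sum.reindex[OF injA, unfolded comp_def])
    finally have "(\<Sum>x\<in>X. sc (f (?A x)) (?A x)) + (\<Sum>z\<in>BW. sc (f z) z) = 0" using s0 by simp
    then have "(\<forall>x\<in>X. f (?A x) = 0) \<and> (\<forall>b\<in>BW. f b = 0)" by (rule KF)
    then show "f z = 0" using zZ unfolding Z_def by blast
  qed
  have phi_ex: "\<exists>phi. Vector_Spaces.linear (\<lambda>(c::'a) (p::'a mpoly). SG 0 c * p) (*) phi \<and>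
      (\<forall>y\<in>X. phi (?A y) = (if y = x then 1 else 0)) \<and> (\<forall>b\<in>BW. phi b = 0)" if xX: "x \<in> X" for x
  proof -
    obtain phi where phi: "Vector_Spaces.linear (\<lambda>(c::'a) (p::'a mpoly). SG 0 c * p) (*) phi"
      "\<forall>z\<in>Z. phi z = (if z = ?A x then 1 else 0)"
      using mvp.linear_independent_extend[OF indZ, of "\<lambda>z. if z = ?A x then 1 else 0"] by blast
    have "\<forall>y\<in>X. phi (?A y) = (if y = x then 1 else 0)"
    proof
      fix y assume y: "y \<in> X"
      have "?A y \<in> Z" unfolding Z_def using y by blast
      then have "phi (?A y) = (if ?A y = ?A x then 1 else 0)" using phi(2) by blast
      moreover have "?A y = ?A x \<longleftrightarrow> y = x" by (rule inj_on_eq_iff[OF injA y xX])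
      ultimately show "phi (?A y) = (if y = x then 1 else 0)" by simp
    qed
    moreover have "\<forall>b\<in>BW. phi b = 0"
      using phi(2) disj xX unfolding Z_def by auto
    ultimately show ?thesis using phi(1) by blast
  qed
  then have "\<forall>x\<in>X. \<exists>phi. Vector_Spaces.linear (\<lambda>(c::'a) (p::'a mpoly). SG 0 c * p) (*) phi \<and>
      (\<forall>y\<in>X. phi (?A y) = (if y = x then 1 else 0)) \<and> (\<forall>b\<in>BW. phi b = 0)" by blast
  from bchoice[OF this] obtain Phi where Phi: "\<forall>x\<in>X. Vector_Spaces.linear (\<lambda>(c::'a) (p::'a mpoly). SG 0 c * p) (*) (Phi x) \<and>
      (\<forall>y\<in>X. Phi x (?A y) = (if y = x then 1 else 0)) \<and> (\<forall>b\<in>BW. Phi x b = 0)"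
    by blast
  obtain xs where xs: "set xs = X" "distinct xs" using finite_distinct_list[OF finX] by blast
  define r where "r = length xs"
  have xsX: "i < r \<Longrightarrow> xs ! i \<in> X" for i using xs(1) by (auto simp: r_def)
  define Mp where "Mp = Matrix.mat r r (\<lambda>(i,j). \<Sum>k<n. SG (ev k) (Phi (xs ! i) (mvar k * xs ! j)))"
  define g where "g = Determinant.det Mp"
  define Mc where "Mc = (\<lambda>c. Matrix.mat r r (\<lambda>(i,j). \<Sum>k<n. Phi (xs ! i) (mvar k * xs ! j) * c k))"
  have mapM: "map_mat (\<lambda>p. mpeval p c) Mp = Mc c" for c
    by (rule eq_matI) (simp_all add: Mp_def Mc_def mpeval_sum mon_eval_ev)
  have detc: "mpeval g c = Determinant.det (Mc c)" for c
    unfolding g_def mapM[symmetric] by (rule comm_ring_hom.hom_det[OF hom_mpeval, symmetric])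
  have Mc_entry: "Mc c $$ (i,j) = Phi (xs ! i) (lin_form n c * xs ! j)" if "i < r" "j < r" for c i j
    using that phi_lin_form[of "Phi (xs ! i)" n c "xs ! j"] Phi xsX[OF that(1)] by (simp add: Mc_def)
  have Mc0: "Mc c0 = 1\<^sub>m r"
  proof (rule eq_matI)
    fix i j assume ij: "i < dim_row (1\<^sub>m r)" "j < dim_col (1\<^sub>m r)"
    then have ij': "i < r" "j < r" by auto
    have "Mc c0 $$ (i,j) = (if xs ! j = xs ! i then 1 else 0)"
      using Mc_entry[OF ij'] Phi xsX[OF ij'(1)] xsX[OF ij'(2)] by simp
    also have "\<dots> = (if i = j then 1 else 0)" using xs(2) ij' by (auto simp: r_def nth_eq_iff_index_eq)
    finally show "Mc c0 $$ (i,j) = 1\<^sub>m r $$ (i,j)" using ij' by simp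
  qed (auto simp: Mc_def)
  have g0: "mpeval g c0 \<noteq> 0" using detc[of c0] Mc0 by simp
  have gpol: "g \<in> polys n"
  proof -
    have ent: "Mp $$ (i,j) \<in> polys n" if "i < r" "j < r" for i j
      using that by (auto simp: Mp_def ev_def intro!: polys_sum polys_single)
    have "map_mat (rn n) Mp = Mp"
      by (rule eq_matI) (use ent in \<open>auto simp: rn_id Mp_def\<close>)
    then have "rn n g = g"
      unfolding g_def using comm_ring_hom.hom_det[OF hom_rn, of n Mp] by simp
    then show ?thesis using rn_polys by metis
  qed
  have goodc: "\<forall>f\<in>V. lin_form n c * f \<in> I \<longrightarrow> f \<in> I" if gc: "mpeval g c \<noteq> 0" for c
  proof (intro ballI impI)
    fix f assume fV: "f \<in> V" and fI: "lin_form n c * f \<in> I"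
    have "f \<in> mv.span (X \<union> BI)" using fV B(4) BXI(1) by auto
    then obtain y z where yz: "f = y + z" "y \<in> mv.span X" "z \<in> mv.span BI"
      unfolding mv.span_Un by blast
    obtain lam where lam: "y = (\<Sum>x\<in>X. sc (lam x) x)" using yz(2) mv.span_finite[OF finX] by auto
    have zI: "z \<in> I" "z \<in> V" using yz(3) spanBI by (auto simp: KV_def)
    have yV: "y \<in> V" using yz(2) XV mv.span_minimal[OF XV sV] by blast
    have lz: "lin_form n c * z \<in> I" using zI(1) Imult by (intro lf_in[OF sI]) auto
    have "lin_form n c * y = lin_form n c * f - lin_form n c * z" using yz(1) by (simp add: distrib_left)
    then have yI: "lin_form n c * y \<in> I"
      using mv.subspace_diff[OF sI fI lz] by simp
    have yW: "lin_form n c * y \<in> W" using yV Mk by (intro lf_in[OF sW]) auto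
    have ySpan: "lin_form n c * y \<in> mv.span BW" using yI yW BW(3) by (auto simp: KW_def)
    have phi0: "Phi x (lin_form n c * y) = 0" if xX: "x \<in> X" for x
    proof -
      note mh = linear_mh[of "Phi x"]
      have mhx: "module_hom (\<lambda>(c::'a) (p::'a mpoly). SG 0 c * p) (*) (Phi x)" using Phi xX mh by blast
      obtain t where t: "lin_form n c * y = (\<Sum>b\<in>BW. sc (t b) b)" using ySpan mv.span_finite[OF finBW] by auto
      have "Phi x (lin_form n c * y) = (\<Sum>b\<in>BW. t b * Phi x b)"
        unfolding t by (simp add: module_hom.sum[OF mhx] module_hom.scale[OF mhx])
      also have "\<dots> = 0" using Phi xX by simp
      finally show ?thesis .
    qed
    define v where "v = vec r (\<lambda>j. lam (xs ! j))"
    have Mv: "Mc c *\<^sub>v v = 0\<^sub>v r"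
    proof (rule eq_vecI)
      show "dim_vec (Mc c *\<^sub>v v) = dim_vec (0\<^sub>v r)" by (simp add: Mc_def)
      fix i assume "i < dim_vec (0\<^sub>v r)"
      then have i: "i < r" by simp
      note mhx = linear_mh[of "Phi (xs ! i)"]
      have mh: "module_hom (\<lambda>(c::'a) (p::'a mpoly). SG 0 c * p) (*) (Phi (xs ! i))"
        using Phi xsX[OF i] mhx by blast
      have "(Mc c *\<^sub>v v) $ i = (\<Sum>j<r. Mc c $$ (i,j) * lam (xs ! j))"
        using i by (simp add: Mc_def v_def scalar_prod_def lessThan_atLeast0)
      also have "\<dots> = (\<Sum>j<r. Phi (xs ! i) (lin_form n c * xs ! j) * lam (xs ! j))"
        by (rule sum.cong[OF refl]) (simp add: Mc_entry[OF i])
      also have "\<dots> = (\<Sum>x\<in>X. Phi (xs ! i) (lin_form n c * x) * lam x)"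
        unfolding xs(1)[symmetric] r_def by (rule sum_set_nth[OF xs(2), symmetric])
      also have "\<dots> = Phi (xs ! i) (lin_form n c * y)"
      proof -
        have "lin_form n c * y = (\<Sum>x\<in>X. sc (lam x) (lin_form n c * x))"
          unfolding lam by (simp add: sum_distrib_left mult.left_commute)
        then have "Phi (xs ! i) (lin_form n c * y) = (\<Sum>x\<in>X. lam x * Phi (xs ! i) (lin_form n c * x))"
          by (simp add: module_hom.sum[OF mh] module_hom.scale[OF mh])
        then show ?thesis by (simp add: mult.commute)
      qed
      also have "\<dots> = 0" using phi0[OF xsX[OF i]] .
      finally show "(Mc c *\<^sub>v v) $ i = 0\<^sub>v r $ i" using i by simp
    qed
    have "Determinant.det (Mc c) \<noteq> 0" using gc detc by simp
    moreover have cm: "Mc c \<in> carrier_mat r r" by (simp add: Mc_def)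
    moreover have vc: "v \<in> carrier_vec r" by (simp add: v_def)
    ultimately have "v = 0\<^sub>v r"
      using det_0_iff_vec_prod_zero_field[OF cm] Mv by blast
    then have "\<forall>x\<in>X. lam x = 0"
    proof (intro ballI)
      fix x assume "x \<in> X"
      then obtain j where j: "j < r" "xs ! j = x" using xs(1) by (auto simp: r_def in_set_conv_nth)
      have "v $ j = 0" using \<open>v = 0\<^sub>v r\<close> j(1) by simp
      then show "lam x = 0" using j by (simp add: v_def)
    qed
    then have "y = 0" using lam by simp
    then show "f \<in> I" using yz(1) zI by simp
  qed
  show ?thesis using gpol g0 goodc by blast
qed


lemma mon_finite: "finite {m::nat \<Rightarrow>\<^sub>0 nat. KS m \<subseteq> {..<n} \<and> mon_deg m = k}"
proof -
  let ?M = "{m::nat \<Rightarrow>\<^sub>0 nat. KS m \<subseteq> {..<n} \<and> mon_deg m = k}"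
  let ?f = "\<lambda>m::nat \<Rightarrow>\<^sub>0 nat. restrict (LK m) {..<n}"
  have "inj_on ?f ?M"
  proof (rule inj_onI)
    fix m m' assume m: "m \<in> ?M" "m' \<in> ?M" "?f m = ?f m'"
    show "m = m'"
    proof (rule poly_mapping_eqI)
      fix i show "LK m i = LK m' i"
      proof (cases "i < n")
        case True then show ?thesis using fun_cong[OF m(3), of i] by simp
      next
        case False then have "i \<notin> KS m" "i \<notin> KS m'" using m by auto
        then show ?thesis by (simp add: in_keys_iff)
      qed
    qed
  qed
  moreover have "?f ` ?M \<subseteq> PiE {..<n} (\<lambda>_. {..k})"
  proof
    fix x assume "x \<in> ?f ` ?M"
    then obtain m where m: "m \<in> ?M" "x = ?f m" by blast
    have le: "LK m i \<le> k" for i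
    proof (cases "i \<in> KS m")
      case True
      have "LK m i \<le> mon_deg m" unfolding mon_deg_def using True by (intro member_le_sum) auto
      then show ?thesis using m by simp
    next
      case False then show ?thesis by (simp add: in_keys_iff)
    qed
    show "x \<in> PiE {..<n} (\<lambda>_. {..k})" using m le by auto
  qed
  moreover have "finite (PiE {..<n} (\<lambda>_. {..k::nat}))" by (intro finite_PiE) auto
  ultimately show ?thesis by (rule inj_on_finite)
qed

definition Bset :: "nat \<Rightarrow> nat \<Rightarrow> 'a::comm_ring_1 mpoly set" where
  "Bset n k = (\<lambda>m. SG m 1) ` {m. KS m \<subseteq> {..<n} \<and> mon_deg m = k}"

lemma finite_Bset: "finite (Bset n k)"
  unfolding Bset_def using mon_finite by blast

lemma homog_span: "homog n k \<subseteq> mv.span (Bset n k :: 'a::field mpoly set)"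
proof
  fix p :: "'a mpoly" assume p: "p \<in> homog n k"
  have "p = (\<Sum>m\<in>KS p. sc (LK p m) (SG m 1))"
    by (subst poly_sum_singles) (simp add: sc_single)
  also have "\<dots> \<in> mv.span (Bset n k)"
  proof (intro mv.span_sum mv.span_scale mv.span_base)
    fix m assume "m \<in> KS p"
    then show "SG m 1 \<in> Bset n k" using p unfolding Bset_def homog_def polys_def by auto
  qed
  finally show "p \<in> mv.span (Bset n k)" .
qed

lemma homog_subspace: "mv.subspace (homog n k :: 'a::field mpoly set)"
  unfolding mv.subspace_def
proof (intro conjI ballI allI)
  show "0 \<in> homog n k" by (simp add: homog_def)
  fix x y :: "'a mpoly" assume "x \<in> homog n k" "y \<in> homog n k"
  then show "x + y \<in> homog n k"
    unfolding homog_def using polys_add keys_add[of x y] by blast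
next
  fix c :: 'a and x :: "'a mpoly" assume "x \<in> homog n k"
  then show "sc c x \<in> homog n k"
    unfolding homog_def using polys_sc keys_sc_subset[of c x] by blast
qed

lemma gi_mult:
  assumes "q \<in> polys n" "p \<in> gen_ideal n gs"
  shows "q * p \<in> gen_ideal n gs"
proof -
  obtain c where c: "p = (\<Sum>j<length gs. c j * gs ! j)" "\<forall>j<length gs. c j \<in> polys n"
    using assms(2) unfolding gen_ideal_def by blast
  have "q * p = (\<Sum>j<length gs. (q * c j) * gs ! j)"
    using c by (simp add: sum_distrib_left mult.assoc)
  moreover have "\<forall>j<length gs. q * c j \<in> polys n" using c assms(1) by (auto intro: polys_mult)
  ultimately show ?thesis unfolding gen_ideal_def by (intro CollectI exI[of _ "\<lambda>j. q * c j"]) simp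
qed

lemma I_subspace: "mv.subspace (I_na n a :: 'a::field mpoly set)"
  unfolding mv.subspace_def I_na_gens
proof (intro conjI ballI allI)
  show "0 \<in> gen_ideal n (gensI n a :: 'a mpoly list)" by (rule gi_zero)
  fix x y :: "'a mpoly" assume "x \<in> gen_ideal n (gensI n a)" "y \<in> gen_ideal n (gensI n a)"
  then show "x + y \<in> gen_ideal n (gensI n a)" by (rule gi_add)
next
  fix c :: 'a and x :: "'a mpoly" assume "x \<in> gen_ideal n (gensI n a)"
  then show "sc c x \<in> gen_ideal n (gensI n a)" by (intro gi_mult polys_single) auto
qed

lemma homog_iff: "p \<in> homog n k \<longleftrightarrow> p \<in> polys n \<and> homS {..<n} k p"
proof
  assume "p \<in> homog n k" then show "p \<in> polys n \<and> homS {..<n} k p"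
    by (simp add: homog_homS) (simp add: homog_def)
next
  assume h: "p \<in> polys n \<and> homS {..<n} k p"
  show "p \<in> homog n k" unfolding homog_def
  proof (intro CollectI conjI ballI)
    show "p \<in> polys n" using h by simp
    fix m assume m: "m \<in> KS p"
    then have "KS m \<subseteq> {..<n}" using h by (auto simp: polys_def)
    then have "mon_deg m = sdeg {..<n} m" by (rule mon_deg_sdeg)
    then show "mon_deg m = k" using h m by (simp add: homS_def)
  qed
qed

lemma Mk_homog:
  assumes "f \<in> homog n (d - 1)" "k < n" "1 \<le> d"
  shows "mvar k * f \<in> homog n d"
proof -
  have "homS {..<n} 1 (mvar k :: 'a::comm_ring_1 mpoly)"
    using homS_single[of "{..<n}" "ev k" "1::'a"] assms(2) by (simp add: mvar_ev sdeg_ev)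
  moreover have "homS {..<n} (d - 1) f" using assms(1) by (simp add: homog_iff)
  ultimately have "homS {..<n} (1 + (d - 1)) (mvar k * f)" by (rule homS_mult)
  moreover have "mvar k * f \<in> polys n"
    using assms by (intro polys_mult polys_mvar) (auto simp: homog_iff)
  ultimately show ?thesis using assms(3) by (simp add: homog_iff)
qed

lemma lin_form_c0:
  assumes "N \<le> n"
  shows "lin_form n (\<lambda>i. if i < N then 1 else 0) = (Lsum {..<N} :: 'a::comm_ring_1 mpoly)"
proof -
  have "lin_form n (\<lambda>i. if i < N then 1 else 0) = (\<Sum>i<n. if i < N then mvar i else (0::'a mpoly))"
    unfolding lin_form_def by (rule sum.cong) (auto simp: mvar_def)
  also have "\<dots> = (\<Sum>i\<in>{..<n} \<inter> {..<N}. mvar i)"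
    by (simp add: sum.inter_restrict)
  also have "{..<n} \<inter> {..<N} = {..<N}" using assms by auto
  finally show ?thesis by (simp add: Lsum_def)
qed

theorem mainTheorem1:
  fixes n a d :: nat
  assumes "n > 0" "a \<ge> 2" "d \<ge> a"
    and "real n \<ge> real_of_int \<lceil>2 * real d / (real a - 1)\<rceil> + (2 * real d - 1) / (real a - 1)"
  shows "general_linear_form n
           (\<lambda>L. mult_injective n (I_na n a :: 'a::field_char_0 mpoly set) L d)"
proof -
  define q where "q = \<lceil>2 * real d / (real a - 1)\<rceil>"
  define N where "N = nat q"
  have ar: "real a - 1 > 0" using assms(2) by simp
  have x0: "0 \<le> 2 * real d / (real a - 1)" using ar by (intro divide_nonneg_pos) auto
  have q0: "q \<ge> 0" unfolding q_def using x0 by (metis ceiling_mono ceiling_zero)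
  have Nq: "real N = real_of_int q" unfolding N_def using q0 by simp
  have "2 * real d / (real a - 1) \<le> real N" unfolding Nq q_def by (rule le_of_int_ceiling)
  then have "2 * real d \<le> real N * (real a - 1)" using ar by (simp add: pos_divide_le_eq)
  moreover have "real (N * (a - 1)) = real N * (real a - 1)" using assms(2) by (simp add: of_nat_diff)
  ultimately have hN: "2 * d \<le> N * (a - 1)" by linarith
  have hn: "real N + (2 * real d - 1) / (real a - 1) \<le> real n" using assms(4) Nq q_def by simp
  have d1: "1 \<le> d" using assms(2,3) by simp
  have nn: "0 \<le> (2 * real d - 1) / (real a - 1)" using ar d1 by (simp add: divide_nonneg_pos)
  have Nn: "N \<le> n" using hn nn by linarith
  have "(2 * real d - 1) / (real a - 1) \<le> real n - real N" using hn by simp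
  then have "2 * real d - 1 \<le> (real n - real N) * (real a - 1)" using ar by (simp add: pos_divide_le_eq)
  moreover have "real ((n - N) * (a - 1)) = (real n - real N) * (real a - 1)"
    using assms(2) Nn by (simp add: of_nat_diff)
  moreover have "real (2 * d - 1) = 2 * real d - 1" using d1 by (simp add: of_nat_diff)
  ultimately have hm: "2 * d - 1 \<le> (n - N) * (a - 1)" by linarith
  define c0 where "c0 = (\<lambda>i. if i < N then (1::'a) else 0)"
  have lf0: "lin_form n c0 = Lsum {..<N}" unfolding c0_def by (rule lin_form_c0[OF Nn])
  have good0: "\<forall>f\<in>homog n (d - 1). lin_form n c0 * f \<in> I_na n a \<longrightarrow> f \<in> (I_na n a :: 'a mpoly set)"
    unfolding lf0 using inj_main[OF Nn assms(2) assms(3) hN hm] by blast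
  have Mk: "\<forall>f\<in>homog n (d - 1). \<forall>k<n. mvar k * f \<in> (homog n d :: 'a mpoly set)"
    using Mk_homog d1 by blast
  have Im: "\<forall>f\<in>(I_na n a :: 'a mpoly set). \<forall>k<n. mvar k * f \<in> I_na n a"
    unfolding I_na_gens by (blast intro: gi_mult polys_mvar)
  obtain g where g: "g \<in> polys n" "mpeval g c0 \<noteq> 0"
    "\<forall>c. mpeval g c \<noteq> 0 \<longrightarrow> (\<forall>f\<in>homog n (d - 1). lin_form n c * f \<in> I_na n a \<longrightarrow> f \<in> (I_na n a :: 'a mpoly set))"
    using semicont[OF finite_Bset homog_span finite_Bset homog_span homog_subspace homog_subspace
        I_subspace Mk Im good0] by blast
  define U where "U = {c \<in> affine_space n. \<exists>g'\<in>{g}. mpeval g' c \<noteq> (0::'a)}"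
  have zo: "zariski_open n U" unfolding zariski_open_def U_def using g(1) by blast
  have c0U: "c0 \<in> U" unfolding U_def affine_space_def using g(2) Nn by (auto simp: c0_def)
  have "\<forall>c\<in>U. mult_injective n (I_na n a :: 'a mpoly set) (lin_form n c) d"
    unfolding U_def mult_injective_def using g(3) by auto
  then show ?thesis unfolding general_linear_form_def using zo c0U by blast
qed


end
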